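(* Let $k$ be a commutative ring, $(H,\alpha)$ a monoidal Hom-Hopf algebra with bijective antipode $S$, $(A,\beta)$ a right $(H,\alpha)$-Hom-comodule algebra, and $\phi:H\to A$ a total integral. Suppose that for all $g,h\in H$, $g\,\phi(h)_{[1]}\otimes\phi(h)_{[0]}=\phi(h)_{[1]}\,g\otimes\phi(h)_{[0]}$ and $\phi(h)\in Z(A)$ (the center of $A$). Then $\theta:H\otimes H\to A$, $\theta(g\otimes h)=\phi(hS^{-1}(g))$, is a normalized $(A,\beta)$-integral.
   Context: Hom-category: objects $(M,\mu)$ with $\mu$ a $k$-linear automorphism; morphisms commute with the automorphisms. Monoidal Hom-algebra $(A,\alpha)$: $\alpha(ab)=\alpha(a)\alpha(b)$, $\alpha(1_A)=1_A$, $\alpha(a)(bc)=(ab)\alpha(c)$, $a1_A=1_Aa=\alpha(a)$. Monoidal Hom-coalgebra $(C,\gamma)$: $\Delta(c)=c_{(1)}\otimes c_{(2)}$, $\varepsilon$, $\Delta\gamma=(\gamma\otimes\gamma)\Delta$, $\varepsilon\gamma=\varepsilon$, $\gamma^{-1}(c_{(1)})\otimes c_{(2)(1)}\otimes c_{(2)(2)}=c_{(1)(1)}\otimes c_{(1)(2)}\otimes\gamma(c_{(2)})$, $\varepsilon(c_{(1)})c_{(2)}=\varepsilon(c_{(2)})c_{(1)}=\gamma^{-1}(c)$. Monoidal Hom-Hopf algebra $(H,\alpha)$: both, $\Delta,\varepsilon$ multiplicative and unital, antipode $S$ with $S(h_{(1)})h_{(2)}=h_{(1)}S(h_{(2)})=\varepsilon(h)1_H$,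 $S\alpha=\alpha S$. Right $(H,\alpha)$-Hom-comodule $(M,\mu)$: $\rho(m)=m_{[0]}\otimes m_{[1]}$, $m_{[0][0]}\otimes m_{[0][1]}\otimes\alpha^{-1}(m_{[1]})=\mu^{-1}(m_{[0]})\otimes\Delta(m_{[1]})$, $m_{[0]}\varepsilon(m_{[1]})=\mu^{-1}(m)$, $\rho(\mu(m))=\mu(m_{[0]})\otimes\alpha(m_{[1]})$. Right Hom-comodule algebra $(A,\beta)$: monoidal Hom-algebra and right $(H,\alpha)$-Hom-comodule with $\rho(ab)=a_{[0]}b_{[0]}\otimes a_{[1]}b_{[1]}$, $\rho(1_A)=1_A\otimes1_H$. Total integral: $k$-linear $\phi:H\to A$ with $\rho_A\phi=(\phi\otimes\mathrm{id}_H)\Delta$, $\phi\alpha=\beta\phi$, $\phi(1_H)=1_A$. Normalized $(A,\beta)$-integral: $k$-linear $\theta:H\otimes H\to A$ with $\theta(\alpha\otimes\alpha)=\beta\theta$ such that for all $g,h\in H$, $a\in A$: (i) $\theta(\alpha^{-1}(g)\otimes h_{(1)})\otimes\alpha(h_{(2)})=\beta(\theta(g_{(2)}\otimes\alpha^{-1}(h))_{[0]})\otimes g_{(1)}\theta(g_{(2)}\otimes\alpha^{-1}(h))_{[1]}$; (ii) $\theta(h_{(1)}\otimes h_{(2)})=\varepsilon(h)1_A$; (iii) $\beta^2(a_{[0][0]})\theta(\alpha^{-1}(g)a_{[0][1]}\otimes\alpha^{-1}(h)\alpha^{-1}(a_{[1]}))=\theta(g\otimes h)a$. *)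

theory Defs
  imports Complex_Main
begin

text \<open>Modules over a commutative ring 'k are types of class ab_group_add with an
explicit scalar multiplication (locale module from HOL). Tensor products are
built as the free 'k-module on pairs (triples) modulo the k-multilinearity
relations; an element of a tensor product is represented by a finite formal
sum, i.e. a list of pairs (triples), scalars being absorbed into the first factor.\<close>

definition klin :: "('k::comm_ring_1 \<Rightarrow> 'a::ab_group_add \<Rightarrow> 'a) \<Rightarrow> ('k \<Rightarrow> 'b::ab_group_add \<Rightarrow> 'b) \<Rightarrow> ('a \<Rightarrow> 'b) \<Rightarrow> bool" where
  "klin s t f \<longleftrightarrow> (\<forall>x y. f (x + y) = f x + f y) \<and> (\<forall>c x. f (s c x) = t c (f x))"

definition bilin :: "('k::comm_ring_1 \<Rightarrow> 'a::ab_group_add \<Rightarrow> 'a) \<Rightarrow> ('k \<Rightarrow> 'b::ab_group_add \<Rightarrow> 'b)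
    \<Rightarrow> ('k \<Rightarrow> 'c::ab_group_add \<Rightarrow> 'c) \<Rightarrow> ('a \<Rightarrow> 'b \<Rightarrow> 'c) \<Rightarrow> bool" where
  "bilin s1 s2 t f \<longleftrightarrow> (\<forall>x. klin s2 t (f x)) \<and> (\<forall>y. klin s1 t (\<lambda>x. f x y))"

inductive_set kspan :: "('x \<Rightarrow> 'k::comm_ring_1) set \<Rightarrow> ('x \<Rightarrow> 'k) set" for R where
  zero: "(\<lambda>_. 0) \<in> kspan R"
| step: "r \<in> R \<Longrightarrow> f \<in> kspan R \<Longrightarrow> (\<lambda>p. c * r p + f p) \<in> kspan R"

definition dl :: "'x \<Rightarrow> 'x \<Rightarrow> 'k::comm_ring_1" where
  "dl x = (\<lambda>p. if p = x then 1 else 0)"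

definition fsum :: "'x list \<Rightarrow> 'x \<Rightarrow> 'k::comm_ring_1" where
  "fsum xs = (\<lambda>p. of_nat (count_list xs p))"

definition tensor2_rel :: "('k::comm_ring_1 \<Rightarrow> 'a::ab_group_add \<Rightarrow> 'a) \<Rightarrow> ('k \<Rightarrow> 'b::ab_group_add \<Rightarrow> 'b)
    \<Rightarrow> ('a \<times> 'b \<Rightarrow> 'k) set" where
  "tensor2_rel s1 s2 =
     {(\<lambda>p. dl (m + m', n) p - dl (m, n) p - dl (m', n) p) | m m' n. True}
   \<union> {(\<lambda>p. dl (m, n + n') p - dl (m, n) p - dl (m, n') p) | m n n'. True}
   \<union> {(\<lambda>p. dl (s1 c m, n) p - c * dl (m, n) p) | c m n. True}
   \<union> {(\<lambda>p. dl (m, s2 c n) p - c * dl (m, n) p) | c m n. True}"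

definition tensor_eq2 :: "('k::comm_ring_1 \<Rightarrow> 'a::ab_group_add \<Rightarrow> 'a) \<Rightarrow> ('k \<Rightarrow> 'b::ab_group_add \<Rightarrow> 'b)
    \<Rightarrow> ('a \<times> 'b) list \<Rightarrow> ('a \<times> 'b) list \<Rightarrow> bool" where
  "tensor_eq2 s1 s2 xs ys \<longleftrightarrow>
     (\<lambda>p. (fsum xs p :: 'k) - fsum ys p) \<in> kspan (tensor2_rel s1 s2)"

definition tensor3_rel :: "('k::comm_ring_1 \<Rightarrow> 'a::ab_group_add \<Rightarrow> 'a) \<Rightarrow> ('k \<Rightarrow> 'b::ab_group_add \<Rightarrow> 'b)
    \<Rightarrow> ('k \<Rightarrow> 'c::ab_group_add \<Rightarrow> 'c) \<Rightarrow> ('a \<times> 'b \<times> 'c \<Rightarrow> 'k) set" where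
  "tensor3_rel s1 s2 s3 =
     {(\<lambda>p. dl (m + m', n, q) p - dl (m, n, q) p - dl (m', n, q) p) | m m' n q. True}
   \<union> {(\<lambda>p. dl (m, n + n', q) p - dl (m, n, q) p - dl (m, n', q) p) | m n n' q. True}
   \<union> {(\<lambda>p. dl (m, n, q + q') p - dl (m, n, q) p - dl (m, n, q') p) | m n q q'. True}
   \<union> {(\<lambda>p. dl (s1 c m, n, q) p - c * dl (m, n, q) p) | c m n q. True}
   \<union> {(\<lambda>p. dl (m, s2 c n, q) p - c * dl (m, n, q) p) | c m n q. True}
   \<union> {(\<lambda>p. dl (m, n, s3 c q) p - c * dl (m, n, q) p) | c m n q. True}"

definition tensor_eq3 :: "('k::comm_ring_1 \<Rightarrow> 'a::ab_group_add \<Rightarrow> 'a) \<Rightarrow> ('k \<Rightarrow> 'b::ab_group_add \<Rightarrow> 'b)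
    \<Rightarrow> ('k \<Rightarrow> 'c::ab_group_add \<Rightarrow> 'c) \<Rightarrow> ('a \<times> 'b \<times> 'c) list \<Rightarrow> ('a \<times> 'b \<times> 'c) list \<Rightarrow> bool" where
  "tensor_eq3 s1 s2 s3 xs ys \<longleftrightarrow>
     (\<lambda>p. (fsum xs p :: 'k) - fsum ys p) \<in> kspan (tensor3_rel s1 s2 s3)"

text \<open>A k-linear map from M into M1 \<otimes> M2, given on representatives.\<close>
definition klin_t2 :: "('k::comm_ring_1 \<Rightarrow> 'm::ab_group_add \<Rightarrow> 'm) \<Rightarrow> ('k \<Rightarrow> 'a::ab_group_add \<Rightarrow> 'a)
    \<Rightarrow> ('k \<Rightarrow> 'b::ab_group_add \<Rightarrow> 'b) \<Rightarrow> ('m \<Rightarrow> ('a \<times> 'b) list) \<Rightarrow> bool" where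
  "klin_t2 s s1 s2 D \<longleftrightarrow>
     (\<forall>x y. tensor_eq2 s1 s2 (D (x + y)) (D x @ D y)) \<and>
     (\<forall>c x. tensor_eq2 s1 s2 (D (s c x)) (map (\<lambda>(u, v). (s1 c u, v)) (D x)))"

definition hom_algebra :: "('k::comm_ring_1 \<Rightarrow> 'a::ab_group_add \<Rightarrow> 'a) \<Rightarrow> ('a \<Rightarrow> 'a \<Rightarrow> 'a) \<Rightarrow> 'a \<Rightarrow> ('a \<Rightarrow> 'a) \<Rightarrow> bool" where
  "hom_algebra s m one \<alpha> \<longleftrightarrow>
     module s \<and> klin s s \<alpha> \<and> bij \<alpha> \<and> bilin s s s m \<and>
     (\<forall>a b. \<alpha> (m a b) = m (\<alpha> a) (\<alpha> b)) \<and> \<alpha> one = one \<and>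
     (\<forall>a b c. m (\<alpha> a) (m b c) = m (m a b) (\<alpha> c)) \<and>
     (\<forall>a. m a one = \<alpha> a \<and> m one a = \<alpha> a)"

definition hom_coalgebra :: "('k::comm_ring_1 \<Rightarrow> 'c::ab_group_add \<Rightarrow> 'c) \<Rightarrow> ('c \<Rightarrow> ('c \<times> 'c) list)
    \<Rightarrow> ('c \<Rightarrow> 'k) \<Rightarrow> ('c \<Rightarrow> 'c) \<Rightarrow> bool" where
  "hom_coalgebra s D e \<gamma> \<longleftrightarrow>
     module s \<and> klin s s \<gamma> \<and> bij \<gamma> \<and> klin_t2 s s s D \<and> klin s (*) e \<and>
     (\<forall>c. tensor_eq2 s s (D (\<gamma> c)) (map (\<lambda>(x, y). (\<gamma> x, \<gamma> y)) (D c))) \<and>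
     (\<forall>c. e (\<gamma> c) = e c) \<and>
     (\<forall>c. tensor_eq3 s s s
           (concat (map (\<lambda>(x, y). map (\<lambda>(u, v). (inv \<gamma> x, u, v)) (D y)) (D c)))
           (concat (map (\<lambda>(x, y). map (\<lambda>(u, v). (u, v, \<gamma> y)) (D x)) (D c)))) \<and>
     (\<forall>c. sum_list (map (\<lambda>(x, y). s (e x) y) (D c)) = inv \<gamma> c \<and>
          sum_list (map (\<lambda>(x, y). s (e y) x) (D c)) = inv \<gamma> c)"

definition hom_hopf :: "('k::comm_ring_1 \<Rightarrow> 'h::ab_group_add \<Rightarrow> 'h) \<Rightarrow> ('h \<Rightarrow> 'h \<Rightarrow> 'h) \<Rightarrow> 'h
    \<Rightarrow> ('h \<Rightarrow> ('h \<times> 'h) list) \<Rightarrow> ('h \<Rightarrow> 'k) \<Rightarrow> ('h \<Rightarrow> 'h) \<Rightarrow> ('h \<Rightarrow> 'h) \<Rightarrow> bool" where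
  "hom_hopf s m one D e S \<alpha> \<longleftrightarrow>
     hom_algebra s m one \<alpha> \<and> hom_coalgebra s D e \<alpha> \<and>
     (\<forall>g h. tensor_eq2 s s (D (m g h))
        (concat (map (\<lambda>(x, y). map (\<lambda>(x', y'). (m x x', m y y')) (D h)) (D g)))) \<and>
     tensor_eq2 s s (D one) [(one, one)] \<and>
     (\<forall>g h. e (m g h) = e g * e h) \<and> e one = 1 \<and>
     klin s s S \<and>
     (\<forall>h. sum_list (map (\<lambda>(x, y). m (S x) y) (D h)) = s (e h) one \<and>
          sum_list (map (\<lambda>(x, y). m x (S y)) (D h)) = s (e h) one) \<and>
     (\<forall>h. S (\<alpha> h) = \<alpha> (S h))"

definition hom_comodule :: "('k::comm_ring_1 \<Rightarrow> 'h::ab_group_add \<Rightarrow> 'h) \<Rightarrow> ('h \<Rightarrow> ('h \<times> 'h) list)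
    \<Rightarrow> ('h \<Rightarrow> 'k) \<Rightarrow> ('h \<Rightarrow> 'h) \<Rightarrow> ('k \<Rightarrow> 'm::ab_group_add \<Rightarrow> 'm) \<Rightarrow> ('m \<Rightarrow> ('m \<times> 'h) list)
    \<Rightarrow> ('m \<Rightarrow> 'm) \<Rightarrow> bool" where
  "hom_comodule sH D e \<alpha> sM \<rho> \<mu> \<longleftrightarrow>
     module sM \<and> klin sM sM \<mu> \<and> bij \<mu> \<and> klin_t2 sM sM sH \<rho> \<and>
     (\<forall>m. tensor_eq3 sM sH sH
        (concat (map (\<lambda>(x, y). map (\<lambda>(u, v). (u, v, inv \<alpha> y)) (\<rho> x)) (\<rho> m)))
        (concat (map (\<lambda>(x, y). map (\<lambda>(p, q). (inv \<mu> x, p, q)) (D y)) (\<rho> m)))) \<and>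
     (\<forall>m. sum_list (map (\<lambda>(x, y). sM (e y) x) (\<rho> m)) = inv \<mu> m) \<and>
     (\<forall>m. tensor_eq2 sM sH (\<rho> (\<mu> m)) (map (\<lambda>(x, y). (\<mu> x, \<alpha> y)) (\<rho> m)))"

definition hom_comodule_algebra :: "('k::comm_ring_1 \<Rightarrow> 'h::ab_group_add \<Rightarrow> 'h) \<Rightarrow> ('h \<Rightarrow> 'h \<Rightarrow> 'h) \<Rightarrow> 'h
    \<Rightarrow> ('h \<Rightarrow> ('h \<times> 'h) list) \<Rightarrow> ('h \<Rightarrow> 'k) \<Rightarrow> ('h \<Rightarrow> 'h)
    \<Rightarrow> ('k \<Rightarrow> 'a::ab_group_add \<Rightarrow> 'a) \<Rightarrow> ('a \<Rightarrow> 'a \<Rightarrow> 'a) \<Rightarrow> 'a \<Rightarrow> ('a \<Rightarrow> ('a \<times> 'h) list)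
    \<Rightarrow> ('a \<Rightarrow> 'a) \<Rightarrow> bool" where
  "hom_comodule_algebra sH mH oneH D e \<alpha> sA mA oneA \<rho> \<beta> \<longleftrightarrow>
     hom_algebra sA mA oneA \<beta> \<and> hom_comodule sH D e \<alpha> sA \<rho> \<beta> \<and>
     (\<forall>a b. tensor_eq2 sA sH (\<rho> (mA a b))
        (concat (map (\<lambda>(x, y). map (\<lambda>(x', y'). (mA x x', mH y y')) (\<rho> b)) (\<rho> a)))) \<and>
     tensor_eq2 sA sH (\<rho> oneA) [(oneA, oneH)]"

definition total_integral :: "('k::comm_ring_1 \<Rightarrow> 'h::ab_group_add \<Rightarrow> 'h) \<Rightarrow> 'h
    \<Rightarrow> ('h \<Rightarrow> ('h \<times> 'h) list) \<Rightarrow> ('h \<Rightarrow> 'h)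
    \<Rightarrow> ('k \<Rightarrow> 'a::ab_group_add \<Rightarrow> 'a) \<Rightarrow> 'a \<Rightarrow> ('a \<Rightarrow> ('a \<times> 'h) list) \<Rightarrow> ('a \<Rightarrow> 'a)
    \<Rightarrow> ('h \<Rightarrow> 'a) \<Rightarrow> bool" where
  "total_integral sH oneH D \<alpha> sA oneA \<rho> \<beta> \<phi> \<longleftrightarrow>
     klin sH sA \<phi> \<and>
     (\<forall>h. tensor_eq2 sA sH (\<rho> (\<phi> h)) (map (\<lambda>(x, y). (\<phi> x, y)) (D h))) \<and>
     (\<forall>h. \<phi> (\<alpha> h) = \<beta> (\<phi> h)) \<and> \<phi> oneH = oneA"

text \<open>A k-linear map H \<otimes> H \<rightarrow> A is given as a k-bilinear map H \<Rightarrow> H \<Rightarrow> A.\<close>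
definition normalized_integral :: "('k::comm_ring_1 \<Rightarrow> 'h::ab_group_add \<Rightarrow> 'h) \<Rightarrow> ('h \<Rightarrow> 'h \<Rightarrow> 'h)
    \<Rightarrow> ('h \<Rightarrow> ('h \<times> 'h) list) \<Rightarrow> ('h \<Rightarrow> 'k) \<Rightarrow> ('h \<Rightarrow> 'h)
    \<Rightarrow> ('k \<Rightarrow> 'a::ab_group_add \<Rightarrow> 'a) \<Rightarrow> ('a \<Rightarrow> 'a \<Rightarrow> 'a) \<Rightarrow> 'a \<Rightarrow> ('a \<Rightarrow> ('a \<times> 'h) list)
    \<Rightarrow> ('a \<Rightarrow> 'a) \<Rightarrow> ('h \<Rightarrow> 'h \<Rightarrow> 'a) \<Rightarrow> bool" where
  "normalized_integral sH mH D e \<alpha> sA mA oneA \<rho> \<beta> \<theta> \<longleftrightarrow>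
     bilin sH sH sA \<theta> \<and>
     (\<forall>g h. \<theta> (\<alpha> g) (\<alpha> h) = \<beta> (\<theta> g h)) \<and>
     (\<forall>g h. tensor_eq2 sA sH
        (map (\<lambda>(x, y). (\<theta> (inv \<alpha> g) x, \<alpha> y)) (D h))
        (concat (map (\<lambda>(x, y). map (\<lambda>(u, v). (\<beta> u, mH x v)) (\<rho> (\<theta> y (inv \<alpha> h)))) (D g)))) \<and>
     (\<forall>h. sum_list (map (\<lambda>(x, y). \<theta> x y) (D h)) = sA (e h) oneA) \<and>
     (\<forall>g h a. sum_list (concat (map (\<lambda>(x, y). map (\<lambda>(u, v).
          mA (\<beta> (\<beta> u)) (\<theta> (mH (inv \<alpha> g) v) (mH (inv \<alpha> h) (inv \<alpha> y)))) (\<rho> x)) (\<rho> a)))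
        = mA (\<theta> g h) a)"

definition center :: "('a \<Rightarrow> 'a \<Rightarrow> 'a) \<Rightarrow> 'a set" where
  "center m = {a. \<forall>b. m a b = m b a}"

end

theory Submission
  imports Defs "HOL-Library.Function_Algebras"
begin


definition supp :: "('x \<Rightarrow> 'k::comm_ring_1) \<Rightarrow> 'x set" where
  "supp c = {p. c p \<noteq> 0}"

definition ev :: "('k::comm_ring_1 \<Rightarrow> 'v::ab_group_add \<Rightarrow> 'v) \<Rightarrow> ('x \<Rightarrow> 'v) \<Rightarrow> ('x \<Rightarrow> 'k) \<Rightarrow> 'v" where
  "ev t f c = (\<Sum>p\<in>supp c. t (c p) (f p))"

definition wsum :: "('k::comm_ring_1 \<times> 'x) list \<Rightarrow> 'x \<Rightarrow> 'k" where
  "wsum ws = (\<lambda>p. sum_list (map (\<lambda>(k, x). if x = p then k else 0) ws))"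

lemma wsum_Nil[simp]: "wsum [] = (\<lambda>_. 0)" by (simp add: wsum_def)
lemma wsum_Cons[simp]: "wsum ((k,x) # ws) p = (if x = p then k else 0) + wsum ws p"
  by (simp add: wsum_def)

lemma supp_wsum: "supp (wsum ws) \<subseteq> snd ` set ws"
  by (induction ws) (auto simp: supp_def split: if_splits)

context module
begin

lemma ev_sup: "finite T \<Longrightarrow> supp c \<subseteq> T \<Longrightarrow> ev scale f c = (\<Sum>p\<in>T. scale (c p) (f p))"
  unfolding ev_def by (rule sum.mono_neutral_left) (auto simp: supp_def)

lemma wsum_sum: "finite T \<Longrightarrow> snd ` set ws \<subseteq> T \<Longrightarrow>
   (\<Sum>p\<in>T. scale (wsum ws p) (f p)) = sum_list (map (\<lambda>(k, x). scale k (f x)) ws)"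
proof (induction ws)
  case Nil then show ?case by simp
next
  case (Cons a ws)
  obtain k x where a: "a = (k, x)" by force
  have xT: "x \<in> T" using Cons.prems a by auto
  have "(\<Sum>p\<in>T. scale (wsum (a # ws) p) (f p)) =
        (\<Sum>p\<in>T. (if x = p then scale k (f p) else 0)) + (\<Sum>p\<in>T. scale (wsum ws p) (f p))"
    by (simp add: a scale_left_distrib sum.distrib[symmetric] cong: if_cong) (rule sum.cong, auto)
  also have "(\<Sum>p\<in>T. (if x = p then scale k (f p) else 0)) = scale k (f x)"
    using Cons.prems xT by simp
  finally show ?case using Cons by (simp add: a)
qed

lemma ev_wsum: "ev scale f (wsum ws) = sum_list (map (\<lambda>(k, x). scale k (f x)) ws)"
  by (subst ev_sup[of "snd ` set ws"]) (auto simp: supp_wsum wsum_sum)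

lemma ev_lin:
  assumes "finite (supp r1)" "finite (supp r2)"
  shows "ev scale f (\<lambda>p. c * r1 p + r2 p) = scale c (ev scale f r1) + ev scale f r2"
proof -
  let ?T = "supp r1 \<union> supp r2"
  have 1: "supp (\<lambda>p. c * r1 p + r2 p) \<subseteq> ?T" by (auto simp: supp_def)
  show ?thesis
    using assms
    apply (subst ev_sup[OF _ 1], simp)
    apply (subst ev_sup[of ?T], simp, simp)
    apply (subst ev_sup[of ?T], simp, simp)
    apply (simp add: scale_left_distrib sum.distrib scale_sum_right)
    done
qed

lemma ev_zero: "ev scale f (\<lambda>_. 0) = 0"
  by (simp add: ev_def supp_def)

lemma kspan_ev:
  assumes N: "subspace N"
    and R: "\<And>r. r \<in> R \<Longrightarrow> finite (supp r) \<and> ev scale f r \<in> N"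
    and c: "c \<in> kspan R"
  shows "finite (supp c) \<and> ev scale f c \<in> N"
  using c
proof (induction c rule: kspan.induct)
  case zero then show ?case using N by (simp add: ev_zero supp_def subspace_0)
next
  case (step r g c)
  have fr: "finite (supp r)" "ev scale f r \<in> N" using R step by auto
  have "supp (\<lambda>p. c * r p + g p) \<subseteq> supp r \<union> supp g" by (auto simp: supp_def)
  then have "finite (supp (\<lambda>p. c * r p + g p))"
    using fr step by (meson finite_UnI finite_subset)
  then show ?case using fr step N
    by (simp add: ev_lin subspace_add subspace_scale)
qed

end

lemma fsum_wsum: "fsum xs = wsum (map (Pair 1) xs)"
  by (induction xs) (auto simp: fsum_def fun_eq_iff)

lemma fsum_diff_wsum: "(\<lambda>p. fsum xs p - fsum ys p) = wsum (map (Pair 1) xs @ map (Pair (-1)) ys)"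
proof -
  have "\<And>p. wsum (map (Pair 1) xs @ map (Pair (-1)) ys) p = fsum xs p - fsum ys p"
  proof (induction xs)
    case Nil
    have "wsum (map (Pair (-1)) ys) p = - fsum ys p" for p
      by (induction ys) (auto simp: fsum_def)
    then show ?case by (simp add: fsum_def)
  next
    case (Cons a xs) then show ?case by (auto simp: fsum_def)
  qed
  then show ?thesis by (intro ext) (rule sym)
qed


lemma finite_supp_wsum: "finite (supp (wsum ws))"
  using supp_wsum by (rule finite_subset) simp

lemma aux3: "(x::'a::ab_group_add) + (- y - z) = x - y - z" by (simp add: algebra_simps)

lemma dl3_wsum: "(\<lambda>p. dl a p - dl b p - dl c p) = wsum [(1,a),(-1,b),(-1,c)]"
  by (auto simp: fun_eq_iff dl_def)
lemma dl2_wsum: "(\<lambda>p. dl a p - k * dl b p) = wsum [(1,a),(-k,b)]"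
  by (auto simp: fun_eq_iff dl_def)

context module
begin

lemma sl_pair: "sum_list (map ((\<lambda>(k, x). scale k (f x)) \<circ> Pair c) xs) = scale c (sum_list (map f xs))"
  by (induction xs) (simp_all add: scale_right_distrib)

lemma teq_gen:
  assumes N: "subspace N"
    and te: "(\<lambda>p. (fsum xs p :: 'a) - fsum ys p) \<in> kspan R"
    and R: "\<And>r. r \<in> R \<Longrightarrow> \<exists>ws. r = wsum ws \<and> sum_list (map (\<lambda>(k, x). scale k (f x)) ws) \<in> N"
  shows "sum_list (map f xs) - sum_list (map f ys) \<in> N"
proof -
  have "finite (supp (\<lambda>p. (fsum xs p :: 'a) - fsum ys p)) \<and> ev scale f (\<lambda>p. fsum xs p - fsum ys p) \<in> N"
    apply (rule kspan_ev[where f=f and R=R])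
    using N apply simp
    using R apply (metis finite_supp_wsum ev_wsum)
    using te apply simp
    done
  then show ?thesis
    by (simp add: fsum_diff_wsum ev_wsum sl_pair)
qed

lemma teq2_N:
  assumes N: "subspace N" and te: "tensor_eq2 s1 s2 xs ys"
    and a1: "\<And>m m' n. f (m + m', n) - f (m, n) - f (m', n) \<in> N"
    and a2: "\<And>m n n'. f (m, n + n') - f (m, n) - f (m, n') \<in> N"
    and a3: "\<And>c m n. f (s1 c m, n) - scale c (f (m, n)) \<in> N"
    and a4: "\<And>c m n. f (m, s2 c n) - scale c (f (m, n)) \<in> N"
  shows "sum_list (map f xs) - sum_list (map f ys) \<in> N"
  apply (rule teq_gen[OF N te[unfolded tensor_eq2_def]])
  unfolding tensor2_rel_def
  apply (elim UnE CollectE exE conjE)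
  subgoal for r m m' n using a1 by (intro exI[of _ "[(1,(m + m', n)),(-1,(m, n)),(-1,(m', n))]"]) (simp add: dl3_wsum aux3)
  subgoal for r m n n' using a2 by (intro exI[of _ "[(1,(m, n+n')),(-1,(m, n)),(-1,(m, n'))]"]) (simp add: dl3_wsum aux3)
  subgoal for r c m n using a3 by (intro exI[of _ "[(1,(s1 c m, n)),(-c,(m, n))]"]) (simp add: dl2_wsum)
  subgoal for r c m n using a4 by (intro exI[of _ "[(1,(m, s2 c n)),(-c,(m, n))]"]) (simp add: dl2_wsum)
  done

lemma teq3_N:
  assumes N: "subspace N" and te: "tensor_eq3 s1 s2 s3 xs ys"
    and a1: "\<And>m m' n q. f (m + m', n, q) - f (m, n, q) - f (m', n, q) \<in> N"
    and a2: "\<And>m n n' q. f (m, n + n', q) - f (m, n, q) - f (m, n', q) \<in> N"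
    and a3: "\<And>m n q q'. f (m, n, q + q') - f (m, n, q) - f (m, n, q') \<in> N"
    and a4: "\<And>c m n q. f (s1 c m, n, q) - scale c (f (m, n, q)) \<in> N"
    and a5: "\<And>c m n q. f (m, s2 c n, q) - scale c (f (m, n, q)) \<in> N"
    and a6: "\<And>c m n q. f (m, n, s3 c q) - scale c (f (m, n, q)) \<in> N"
  shows "sum_list (map f xs) - sum_list (map f ys) \<in> N"
  apply (rule teq_gen[OF N te[unfolded tensor_eq3_def]])
  unfolding tensor3_rel_def
  apply (elim UnE CollectE exE conjE)
  subgoal for r m m' n q using a1 by (intro exI[of _ "[(1,(m + m', n, q)),(-1,(m, n, q)),(-1,(m', n, q))]"]) (simp add: dl3_wsum aux3)
  subgoal for r m n n' q using a2 by (intro exI[of _ "[(1,(m, n+n', q)),(-1,(m, n, q)),(-1,(m, n', q))]"]) (simp add: dl3_wsum aux3)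
  subgoal for r m n q q' using a3 by (intro exI[of _ "[(1,(m, n, q+q')),(-1,(m, n, q)),(-1,(m, n, q'))]"]) (simp add: dl3_wsum aux3)
  subgoal for r c m n q using a4 by (intro exI[of _ "[(1,(s1 c m, n, q)),(-c,(m, n, q))]"]) (simp add: dl2_wsum)
  subgoal for r c m n q using a5 by (intro exI[of _ "[(1,(m, s2 c n, q)),(-c,(m, n, q))]"]) (simp add: dl2_wsum)
  subgoal for r c m n q using a6 by (intro exI[of _ "[(1,(m, n, s3 c q)),(-c,(m, n, q))]"]) (simp add: dl2_wsum)
  done

end


definition trilin :: "('k::comm_ring_1 \<Rightarrow> 'a::ab_group_add \<Rightarrow> 'a) \<Rightarrow> ('k \<Rightarrow> 'b::ab_group_add \<Rightarrow> 'b)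
    \<Rightarrow> ('k \<Rightarrow> 'c::ab_group_add \<Rightarrow> 'c) \<Rightarrow> ('k \<Rightarrow> 'd::ab_group_add \<Rightarrow> 'd) \<Rightarrow> ('a \<Rightarrow> 'b \<Rightarrow> 'c \<Rightarrow> 'd) \<Rightarrow> bool" where
  "trilin s1 s2 s3 t f \<longleftrightarrow> (\<forall>y z. klin s1 t (\<lambda>x. f x y z)) \<and> (\<forall>x z. klin s2 t (\<lambda>y. f x y z)) \<and> (\<forall>x y. klin s3 t (\<lambda>z. f x y z))"

lemma klinD: "klin s t f \<Longrightarrow> f (x + y) = f x + f y" "klin s t f \<Longrightarrow> f (s c x) = t c (f x)"
  by (auto simp: klin_def)

lemma teq2_sum:
  assumes t: "module t" and g: "bilin s1 s2 t g" and te: "tensor_eq2 s1 s2 xs ys"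
  shows "sum_list (map (\<lambda>(x, y). g x y) xs) = sum_list (map (\<lambda>(x, y). g x y) ys)"
proof -
  interpret module t by fact
  have "sum_list (map (\<lambda>(x, y). g x y) xs) - sum_list (map (\<lambda>(x, y). g x y) ys) \<in> {0}"
    apply (rule teq2_N[OF subspace_single_0 te])
    using g by (auto simp: bilin_def klin_def)
  then show ?thesis by simp
qed

lemma teq3_sum:
  assumes t: "module t" and g: "trilin s1 s2 s3 t g" and te: "tensor_eq3 s1 s2 s3 xs ys"
  shows "sum_list (map (\<lambda>(x, y, z). g x y z) xs) = sum_list (map (\<lambda>(x, y, z). g x y z) ys)"
proof -
  interpret module t by fact
  have "sum_list (map (\<lambda>(x, y, z). g x y z) xs) - sum_list (map (\<lambda>(x, y, z). g x y z) ys) \<in> {0}"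
    apply (rule teq3_N[OF subspace_single_0 te])
    using g by (auto simp: trilin_def klin_def)
  then show ?thesis by simp
qed

lemma module_fun: "module (\<lambda>(c::'k::comm_ring_1) (g::'x \<Rightarrow> 'k) p. c * g p)"
  by unfold_locales (auto simp: fun_eq_iff algebra_simps)

lemma kspan_add: "a \<in> kspan R \<Longrightarrow> b \<in> kspan R \<Longrightarrow> (\<lambda>p. a p + b p) \<in> kspan R"
proof (induction a rule: kspan.induct)
  case zero then show ?case by simp
next
  case (step r f c)
  have "(\<lambda>p. c * r p + f p + b p) = (\<lambda>p. c * r p + (f p + b p))" by (simp add: algebra_simps)
  then show ?case using kspan.step[OF step.hyps(1) step.IH[OF step.prems], of c] by simp
qed

lemma kspan_smult: "a \<in> kspan R \<Longrightarrow> (\<lambda>p. c * a p) \<in> kspan R"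
proof (induction a rule: kspan.induct)
  case zero then show ?case by (simp add: kspan.zero)
next
  case (step r f d)
  have "(\<lambda>p. c * (d * r p + f p)) = (\<lambda>p. (c * d) * r p + c * f p)" by (simp add: algebra_simps)
  then show ?case using kspan.step[OF step.hyps(1) step.IH, of "c * d"] by simp
qed

lemma kspan_diff: "a \<in> kspan R \<Longrightarrow> b \<in> kspan R \<Longrightarrow> (\<lambda>p. a p - b p) \<in> kspan R"
  using kspan_add[of a R "\<lambda>p. (-1) * b p"] kspan_smult[of b R "-1"] by simp

lemma kspan_gen: "r \<in> R \<Longrightarrow> r \<in> kspan R"
  using kspan.step[OF _ kspan.zero, of r R 1] by simp

lemma subspace_kspan: "module.subspace (\<lambda>(c::'k::comm_ring_1) (g::'x \<Rightarrow> 'k) p. c * g p) (kspan R)"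
  unfolding module.subspace_def[OF module_fun]
  using kspan.zero kspan_add kspan_smult by (auto simp: plus_fun_def zero_fun_def)

lemma fsum_Nil[simp]: "fsum [] = (\<lambda>_. 0)" by (simp add: fsum_def)
lemma fsum_Cons: "fsum (x # xs) = (\<lambda>p. dl x p + fsum xs p)"
  by (auto simp: fsum_def dl_def fun_eq_iff)
lemma fsum_append: "fsum (xs @ ys) = (\<lambda>p. fsum xs p + fsum ys p)"
  by (auto simp: fsum_def fun_eq_iff)
lemma fsum_concat: "fsum (concat (map F xs)) = sum_list (map (\<lambda>x. fsum (F x)) xs)"
  by (induction xs) (auto simp: fsum_append plus_fun_def)

lemma teq2_refl: "tensor_eq2 s1 s2 xs xs"
  by (simp add: tensor_eq2_def kspan.zero)
lemma teq2_eqI: "fsum xs = (fsum ys :: _ \<Rightarrow> 'k) \<Longrightarrow> tensor_eq2 s1 s2 xs ys"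
  for s1 :: "'k::comm_ring_1 \<Rightarrow> _"
  by (simp add: tensor_eq2_def kspan.zero)
lemma teq2_sym: "tensor_eq2 s1 s2 xs ys \<Longrightarrow> tensor_eq2 s1 s2 ys xs"
  unfolding tensor_eq2_def using kspan_smult[of _ _ "-1"] by fastforce
lemma teq2_trans: "tensor_eq2 s1 s2 xs ys \<Longrightarrow> tensor_eq2 s1 s2 ys zs \<Longrightarrow> tensor_eq2 s1 s2 xs zs"
  unfolding tensor_eq2_def using kspan_add by fastforce
declare teq2_trans[trans]

lemma teq2_append: "tensor_eq2 s1 s2 xs ys \<Longrightarrow> tensor_eq2 s1 s2 xs' ys' \<Longrightarrow> tensor_eq2 s1 s2 (xs @ xs') (ys @ ys')"
  unfolding tensor_eq2_def using kspan_add by (fastforce simp: fsum_append algebra_simps)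
lemma teq2_concat: "(\<And>z. z \<in> set zs \<Longrightarrow> tensor_eq2 s1 s2 (P z) (Q z)) \<Longrightarrow>
    tensor_eq2 s1 s2 (concat (map P zs)) (concat (map Q zs))"
  by (induction zs) (auto simp: teq2_refl teq2_append)

lemma teq2_scal: "(\<lambda>p. fsum (map (\<lambda>(u, v). (t1 c u, v)) ys) p - (c::'k::comm_ring_1) * fsum ys p) \<in> kspan (tensor2_rel t1 t2)"
proof (induction ys)
  case Nil then show ?case by (simp add: kspan.zero)
next
  case (Cons a ys)
  obtain u v where a: "a = (u, v)" by force
  have g: "(\<lambda>p. dl (t1 c u, v) p - c * dl (u, v) p) \<in> tensor2_rel t1 t2"
    unfolding tensor2_rel_def by blast
  have "(\<lambda>p. fsum (map (\<lambda>(u, v). (t1 c u, v)) (a # ys)) p - c * fsum (a # ys) p)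
     = (\<lambda>p. 1 * (dl (t1 c u, v) p - c * dl (u, v) p) + (fsum (map (\<lambda>(u, v). (t1 c u, v)) ys) p - c * fsum ys p))"
    by (simp add: a fsum_Cons algebra_simps)
  then show ?case using kspan.step[OF g Cons.IH, of 1] by simp
qed

definition tbil :: "('k::comm_ring_1 \<Rightarrow> 'a::ab_group_add \<Rightarrow> 'a) \<Rightarrow> ('k \<Rightarrow> 'b::ab_group_add \<Rightarrow> 'b)
   \<Rightarrow> ('k \<Rightarrow> 'c::ab_group_add \<Rightarrow> 'c) \<Rightarrow> ('k \<Rightarrow> 'd::ab_group_add \<Rightarrow> 'd) \<Rightarrow> ('a \<Rightarrow> 'b \<Rightarrow> ('c \<times> 'd) list) \<Rightarrow> bool" where
  "tbil s1 s2 t1 t2 F \<longleftrightarrow>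
     (\<forall>m m' n. tensor_eq2 t1 t2 (F (m + m') n) (F m n @ F m' n)) \<and>
     (\<forall>m n n'. tensor_eq2 t1 t2 (F m (n + n')) (F m n @ F m n')) \<and>
     (\<forall>c m n. tensor_eq2 t1 t2 (F (s1 c m) n) (map (\<lambda>(u, v). (t1 c u, v)) (F m n))) \<and>
     (\<forall>c m n. tensor_eq2 t1 t2 (F m (s2 c n)) (map (\<lambda>(u, v). (t1 c u, v)) (F m n)))"

definition ttri :: "('k::comm_ring_1 \<Rightarrow> 'a::ab_group_add \<Rightarrow> 'a) \<Rightarrow> ('k \<Rightarrow> 'b::ab_group_add \<Rightarrow> 'b) \<Rightarrow> ('k \<Rightarrow> 'e::ab_group_add \<Rightarrow> 'e)
   \<Rightarrow> ('k \<Rightarrow> 'c::ab_group_add \<Rightarrow> 'c) \<Rightarrow> ('k \<Rightarrow> 'd::ab_group_add \<Rightarrow> 'd) \<Rightarrow> ('a \<Rightarrow> 'b \<Rightarrow> 'e \<Rightarrow> ('c \<times> 'd) list) \<Rightarrow> bool" where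
  "ttri s1 s2 s3 t1 t2 F \<longleftrightarrow>
     (\<forall>m m' n q. tensor_eq2 t1 t2 (F (m + m') n q) (F m n q @ F m' n q)) \<and>
     (\<forall>m n n' q. tensor_eq2 t1 t2 (F m (n + n') q) (F m n q @ F m n' q)) \<and>
     (\<forall>m n q q'. tensor_eq2 t1 t2 (F m n (q + q')) (F m n q @ F m n q')) \<and>
     (\<forall>c m n q. tensor_eq2 t1 t2 (F (s1 c m) n q) (map (\<lambda>(u, v). (t1 c u, v)) (F m n q))) \<and>
     (\<forall>c m n q. tensor_eq2 t1 t2 (F m (s2 c n) q) (map (\<lambda>(u, v). (t1 c u, v)) (F m n q))) \<and>
     (\<forall>c m n q. tensor_eq2 t1 t2 (F m n (s3 c q)) (map (\<lambda>(u, v). (t1 c u, v)) (F m n q)))"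

lemma teq_scal_aux:
  assumes "tensor_eq2 t1 t2 A (map (\<lambda>(u, v). (t1 c u, v)) B)"
  shows "(fsum A - (\<lambda>p. c * fsum B p)) \<in> kspan (tensor2_rel t1 t2)"
proof -
  have "(\<lambda>p. (fsum A p - fsum (map (\<lambda>(u, v). (t1 c u, v)) B) p) + (fsum (map (\<lambda>(u, v). (t1 c u, v)) B) p - c * fsum B p)) \<in> kspan (tensor2_rel t1 t2)"
    using assms teq2_scal kspan_add unfolding tensor_eq2_def by blast
  then show ?thesis by (simp add: fun_diff_def)
qed

lemma teq_add_aux:
  assumes "tensor_eq2 t1 t2 A (B @ C)"
  shows "(fsum A - fsum B - fsum C) \<in> kspan (tensor2_rel t1 t2)"
  using assms unfolding tensor_eq2_def by (simp add: fsum_append fun_diff_def algebra_simps)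

lemma teq2_map:
  fixes F :: "'a::ab_group_add \<Rightarrow> 'b::ab_group_add \<Rightarrow> ('c::ab_group_add \<times> 'd::ab_group_add) list"
    and t1 :: "'k::comm_ring_1 \<Rightarrow> 'c \<Rightarrow> 'c"
  assumes te: "tensor_eq2 s1 s2 xs ys" and F: "tbil s1 s2 t1 t2 F"
  shows "tensor_eq2 t1 t2 (concat (map (\<lambda>(x, y). F x y) xs)) (concat (map (\<lambda>(x, y). F x y) ys))"
proof -
  interpret V: module "\<lambda>(c::'k::comm_ring_1) (g::'c \<times> 'd \<Rightarrow> 'k) p. c * g p" by (rule module_fun)
  have "sum_list (map (\<lambda>(x, y). fsum (F x y)) xs) - sum_list (map (\<lambda>(x, y). fsum (F x y)) ys) \<in> kspan (tensor2_rel t1 t2)"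
    apply (rule V.teq2_N[where f="\<lambda>(x, y). fsum (F x y)", OF subspace_kspan te])
    using F unfolding tbil_def by (auto intro: teq_scal_aux teq_add_aux)
  moreover have "\<And>zs. (fsum (concat (map (\<lambda>(x, y). F x y) zs)) :: _ \<Rightarrow> 'k) = sum_list (map (\<lambda>(x, y). fsum (F x y)) zs)"
    by (simp add: fsum_concat case_prod_beta')
  ultimately show ?thesis unfolding tensor_eq2_def by (simp add: fun_diff_def)
qed

lemma teq3_map:
  fixes F :: "'a::ab_group_add \<Rightarrow> 'b::ab_group_add \<Rightarrow> 'e::ab_group_add \<Rightarrow> ('c::ab_group_add \<times> 'd::ab_group_add) list"
    and t1 :: "'k::comm_ring_1 \<Rightarrow> 'c \<Rightarrow> 'c"
  assumes te: "tensor_eq3 s1 s2 s3 xs ys" and F: "ttri s1 s2 s3 t1 t2 F"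
  shows "tensor_eq2 t1 t2 (concat (map (\<lambda>(x, y, z). F x y z) xs)) (concat (map (\<lambda>(x, y, z). F x y z) ys))"
proof -
  interpret V: module "\<lambda>(c::'k::comm_ring_1) (g::'c \<times> 'd \<Rightarrow> 'k) p. c * g p" by (rule module_fun)
  have "sum_list (map (\<lambda>(x, y, z). fsum (F x y z)) xs) - sum_list (map (\<lambda>(x, y, z). fsum (F x y z)) ys) \<in> kspan (tensor2_rel t1 t2)"
    apply (rule V.teq3_N[where f="\<lambda>(x, y, z). fsum (F x y z)", OF subspace_kspan te])
    using F unfolding ttri_def by (auto intro: teq_scal_aux teq_add_aux)
  moreover have "\<And>zs. (fsum (concat (map (\<lambda>(x, y, z). F x y z) zs)) :: _ \<Rightarrow> 'k) = sum_list (map (\<lambda>(x, y, z). fsum (F x y z)) zs)"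
    by (simp add: fsum_concat case_prod_beta')
  ultimately show ?thesis unfolding tensor_eq2_def by (simp add: fun_diff_def)
qed


lemma klin_zero: "klin s t f \<Longrightarrow> f 0 = 0"
  unfolding klin_def by (metis add_cancel_right_right)
lemma klin_sum_list: "klin s t f \<Longrightarrow> f (sum_list xs) = sum_list (map f xs)"
  by (induction xs) (auto simp: klin_zero klin_def)
lemma klin_diff: "klin s t f \<Longrightarrow> f (x - y) = f x - f y"
proof -
  assume k: "klin s t f"
  have "f (x - y) + f y = f x" using k unfolding klin_def by (metis diff_add_cancel)
  then show ?thesis by (metis add_diff_cancel)
qed
lemma klin_add: "klin s t f \<Longrightarrow> f (x + y) = f x + f y" by (simp add: klin_def)
lemma klin_scale: "klin s t f \<Longrightarrow> f (s c x) = t c (f x)" by (simp add: klin_def)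

lemma module_sum_scale: "module s \<Longrightarrow> sum_list (map (\<lambda>x. s c (g x)) xs) = s c (sum_list (map g xs))"
  by (induction xs) (auto simp: module.scale_right_distrib module.scale_zero_right)
lemma module_sum_scale2: "module s \<Longrightarrow> sum_list (map (\<lambda>x. s (g x) v) xs) = s (sum_list (map g xs)) v"
  by (induction xs) (auto simp: module.scale_left_distrib module.scale_zero_left)

lemma module_mult: "module (\<lambda>a b::'k::comm_ring_1. a * b)"
  by unfold_locales (auto simp: algebra_simps)

lemma klin_inv: "bij f \<Longrightarrow> klin s t f \<Longrightarrow> klin t s (inv f)"
  unfolding klin_def by (metis bij_inv_eq_iff)

lemma sum_concat_map: "sum_list (map f (concat xss)) = sum_list (map (\<lambda>xs. sum_list (map f xs)) xss)"
  by (induction xss) auto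

lemma sum_swap: "sum_list (map (\<lambda>x. sum_list (map (\<lambda>y. f x y) ys)) xs) = sum_list (map (\<lambda>y. sum_list (map (\<lambda>x. f x y) xs)) ys)"
  for f :: "_ \<Rightarrow> _ \<Rightarrow> 'a::comm_monoid_add"
  by (induction xs) (simp_all add: sum_list_addf)

lemma klin_id: "klin s s (\<lambda>x. x)" by (simp add: klin_def)

lemma klin_sum: "module t \<Longrightarrow> (\<And>u v. klin s t (\<lambda>x. g x u v)) \<Longrightarrow> klin s t (\<lambda>x. sum_list (map (\<lambda>(u, v). g x u v) ys))"
  unfolding klin_def by (induction ys) (auto simp: module.scale_right_distrib module.scale_zero_right algebra_simps)

lemma klin_sum3: "module t \<Longrightarrow> (\<And>u v w. klin s t (\<lambda>x. g x u v w)) \<Longrightarrow> klin s t (\<lambda>x. sum_list (map (\<lambda>(u, v, w). g x u v w) ys))"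
  unfolding klin_def by (induction ys) (auto simp: module.scale_right_distrib module.scale_zero_right algebra_simps)

lemma klin_scale_const: "module t \<Longrightarrow> klin s t f \<Longrightarrow> klin s t (\<lambda>x. t c (f x))"
  unfolding klin_def by (auto simp: module.scale_right_distrib module.scale_left_commute)

lemma klin_scale_lin: "module t \<Longrightarrow> klin s (*) g \<Longrightarrow> klin s t (\<lambda>x. t (g x) v)"
  unfolding klin_def by (auto simp: module.scale_left_distrib module.scale_scale)

lemma klin_bil1: "bilin t1 t2 t3 m \<Longrightarrow> klin s t1 f \<Longrightarrow> klin s t3 (\<lambda>x. m (f x) c)"
  unfolding bilin_def klin_def by auto
lemma klin_bil2: "bilin t1 t2 t3 m \<Longrightarrow> klin s t2 f \<Longrightarrow> klin s t3 (\<lambda>x. m c (f x))"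
  unfolding bilin_def klin_def by auto
lemma klin_comp: "klin t1 t2 g \<Longrightarrow> klin s t1 f \<Longrightarrow> klin s t2 (\<lambda>x. g (f x))"
  unfolding klin_def by auto

lemma bilinI: "(\<And>x. klin s2 t (f x)) \<Longrightarrow> (\<And>y. klin s1 t (\<lambda>x. f x y)) \<Longrightarrow> bilin s1 s2 t f"
  by (simp add: bilin_def)
lemma trilinI: "(\<And>y z. klin s1 t (\<lambda>x. f x y z)) \<Longrightarrow> (\<And>x z. klin s2 t (\<lambda>y. f x y z)) \<Longrightarrow> (\<And>x y. klin s3 t (\<lambda>z. f x y z)) \<Longrightarrow> trilin s1 s2 s3 t f"
  by (simp add: trilin_def)

lemma sum_teq:
  assumes "klin_t2 s s1 s2 D" "bilin s1 s2 t f" "module t"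
  shows "klin s t (\<lambda>h. sum_list (map (\<lambda>(x, y). f x y) (D h)))"
proof -
  have b: "bilin s1 s2 t (\<lambda>x y. f x y)" using assms by simp
  show ?thesis unfolding klin_def
  proof (intro conjI allI)
    fix x y
    show "(\<Sum>(a, b)\<leftarrow>D (x + y). f a b) = (\<Sum>(a, b)\<leftarrow>D x. f a b) + (\<Sum>(a, b)\<leftarrow>D y. f a b)"
      using teq2_sum[OF assms(3) b] assms(1) unfolding klin_t2_def by (metis (no_types) map_append sum_list_append)
  next
    fix c x
    have "tensor_eq2 s1 s2 (D (s c x)) (map (\<lambda>(u, v). (s1 c u, v)) (D x))"
      using assms(1) unfolding klin_t2_def by auto
    then have "(\<Sum>(a, b)\<leftarrow>D (s c x). f a b) = (\<Sum>(a, b)\<leftarrow>map (\<lambda>(u, v). (s1 c u, v)) (D x). f a b)"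
      by (rule teq2_sum[OF assms(3) b])
    also have "\<dots> = (\<Sum>(a, b)\<leftarrow>D x. t c (f a b))"
      using assms(2) by (simp add: comp_def case_prod_beta' bilin_def klin_def)
    also have "\<dots> = t c (\<Sum>(a, b)\<leftarrow>D x. f a b)"
      using module_sum_scale[OF assms(3), of c "\<lambda>(a,b). f a b" "D x"] by (simp add: case_prod_beta')
    finally show "(\<Sum>(a, b)\<leftarrow>D (s c x). f a b) = t c (\<Sum>(a, b)\<leftarrow>D x. f a b)" .
  qed
qed


lemma sl_scale2: "module s \<Longrightarrow> (\<Sum>(u, v)\<leftarrow>xs. s c (g u v)) = s c (\<Sum>(u, v)\<leftarrow>xs. g u v)"
  by (induction xs) (auto simp: module.scale_right_distrib module.scale_zero_right)
lemma sl_scale2': "module s \<Longrightarrow> (\<Sum>(u, v)\<leftarrow>xs. s (g u v) w) = s (\<Sum>(u, v)\<leftarrow>xs. g u v) w"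
  by (induction xs) (auto simp: module.scale_left_distrib module.scale_zero_left)
lemma sl_klin2: "klin s t f \<Longrightarrow> (\<Sum>(u, v)\<leftarrow>xs. f (g u v)) = f (\<Sum>(u, v)\<leftarrow>xs. g u v)"
  by (induction xs) (auto simp: klin_add klin_zero)
lemma sl_bil1: "bilin s1 s2 t m \<Longrightarrow> (\<Sum>(u, v)\<leftarrow>xs. m (g u v) w) = m (\<Sum>(u, v)\<leftarrow>xs. g u v) w"
  unfolding bilin_def using sl_klin2[of s1 t "\<lambda>x. m x w" g xs] by auto
lemma sl_bil2: "bilin s1 s2 t m \<Longrightarrow> (\<Sum>(u, v)\<leftarrow>xs. m w (g u v)) = m w (\<Sum>(u, v)\<leftarrow>xs. g u v)"
  unfolding bilin_def using sl_klin2[of s2 t "m w" g xs] by auto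
lemma sl_mult2: "(\<Sum>(u, v)\<leftarrow>xs. c * (g u v)) = c * (\<Sum>(u, v)\<leftarrow>xs. g u v)"
  for c :: "'k::comm_ring_1"
  by (induction xs) (auto simp: algebra_simps)
lemma sl_mult2': "(\<Sum>(u, v)\<leftarrow>xs. (g u v) * c) = (\<Sum>(u, v)\<leftarrow>xs. g u v) * c"
  for c :: "'k::comm_ring_1"
  by (induction xs) (auto simp: algebra_simps)
lemma sl_concat2: "(\<Sum>(x, y)\<leftarrow>concat (map (\<lambda>(u, v). G u v) L). f x y) = (\<Sum>(u, v)\<leftarrow>L. \<Sum>(x, y)\<leftarrow>G u v. f x y)"
  by (induction L) auto
lemma sl_concat3: "(\<Sum>(x, y, z)\<leftarrow>concat (map (\<lambda>(u, v). G u v) L). f x y z) = (\<Sum>(u, v)\<leftarrow>L. \<Sum>(x, y, z)\<leftarrow>G u v. f x y z)"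
  by (induction L) auto
lemma sl_map2: "(\<Sum>(x, y)\<leftarrow>map (\<lambda>(u, v). (a u v, b u v)) L. f x y) = (\<Sum>(u, v)\<leftarrow>L. f (a u v) (b u v))"
  by (induction L) auto
lemma sl_map3: "(\<Sum>(x, y, z)\<leftarrow>map (\<lambda>(u, v). (a u v, b u v, c u v)) L. f x y z) = (\<Sum>(u, v)\<leftarrow>L. f (a u v) (b u v) (c u v))"
  by (induction L) auto
lemma sl_map3P: "(\<Sum>(x, y, z)\<leftarrow>map (Pair a) L. f x y z) = (\<Sum>(u, v)\<leftarrow>L. f a u v)"
  by (induction L) auto

lemma sl_add2: "(\<Sum>(u, v)\<leftarrow>xs. f u v + g u v) = (\<Sum>(u, v)\<leftarrow>xs. f u v) + (\<Sum>(u, v)\<leftarrow>xs. g u v)"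
  for f :: "_ \<Rightarrow> _ \<Rightarrow> 'a::comm_monoid_add"
  by (induction xs) (auto simp: algebra_simps)
lemma sl_swap2: "(\<Sum>(x, y)\<leftarrow>xs. \<Sum>(u, v)\<leftarrow>ys. f x y u v) = (\<Sum>(u, v)\<leftarrow>ys. \<Sum>(x, y)\<leftarrow>xs. f x y u v)"
  for f :: "_ \<Rightarrow> _ \<Rightarrow> _ \<Rightarrow> _ \<Rightarrow> 'a::comm_monoid_add"
  by (induction xs) (auto simp: sl_add2)


lemma fsum_single: "fsum [x] = dl x" by (simp add: fsum_Cons)

lemma teq2_addL: "tensor_eq2 s1 s2 [(a + a', b)] [(a, b), (a', b)]"
proof -
  have "(\<lambda>p. dl (a + a', b) p - dl (a, b) p - dl (a', b) p) \<in> tensor2_rel s1 s2"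
    unfolding tensor2_rel_def by blast
  then show ?thesis unfolding tensor_eq2_def
    by (auto simp: fsum_Cons algebra_simps dest: kspan_gen)
qed
lemma teq2_addR: "tensor_eq2 s1 s2 [(a, b + b')] [(a, b), (a, b')]"
proof -
  have "(\<lambda>p. dl (a, b + b') p - dl (a, b) p - dl (a, b') p) \<in> tensor2_rel s1 s2"
    unfolding tensor2_rel_def by blast
  then show ?thesis unfolding tensor_eq2_def
    by (auto simp: fsum_Cons algebra_simps dest: kspan_gen)
qed
lemma teq2_scR: "tensor_eq2 s1 s2 [(a, s2 c b)] [(s1 c a, b)]"
proof -
  have "(\<lambda>p. dl (a, s2 c b) p - c * dl (a, b) p) \<in> tensor2_rel s1 s2"
       "(\<lambda>p. dl (s1 c a, b) p - c * dl (a, b) p) \<in> tensor2_rel s1 s2"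
    unfolding tensor2_rel_def by blast+
  then have "(\<lambda>p. (dl (a, s2 c b) p - c * dl (a, b) p) - (dl (s1 c a, b) p - c * dl (a, b) p)) \<in> kspan (tensor2_rel s1 s2)"
    by (intro kspan_diff kspan_gen)
  then show ?thesis unfolding tensor_eq2_def
    by (auto simp: fsum_Cons algebra_simps)
qed

lemma teq2_map_lin:
  assumes f: "klin s1 t1 f" and g: "klin s2 t2 g" and te: "tensor_eq2 s1 s2 xs ys"
  shows "tensor_eq2 t1 t2 (map (\<lambda>(x, y). (f x, g y)) xs) (map (\<lambda>(x, y). (f x, g y)) ys)"
proof -
  have "tbil s1 s2 t1 t2 (\<lambda>x y. [(f x, g y)])"
    unfolding tbil_def using f g
    by (auto simp: klin_add klin_scale teq2_addL teq2_addR teq2_scR teq2_refl)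
  from teq2_map[OF te this] show ?thesis
    by (simp add: concat_map_singleton case_prod_beta')
qed

lemma teq2_map_swap:
  assumes f: "klin s1 t2 f" and g: "klin s2 t1 g" and te: "tensor_eq2 s1 s2 xs ys"
  shows "tensor_eq2 t1 t2 (map (\<lambda>(x, y). (g y, f x)) xs) (map (\<lambda>(x, y). (g y, f x)) ys)"
proof -
  have "tbil s1 s2 t1 t2 (\<lambda>x y. [(g y, f x)])"
    unfolding tbil_def using f g
    by (auto simp: klin_add klin_scale teq2_addL teq2_addR teq2_scR teq2_refl teq2_sym)
  from teq2_map[OF te this] show ?thesis
    by (simp add: concat_map_singleton case_prod_beta')
qed


locale HH =
  fixes sH :: "'k::comm_ring_1 \<Rightarrow> 'h::ab_group_add \<Rightarrow> 'h"
    and mH :: "'h \<Rightarrow> 'h \<Rightarrow> 'h" and oneH :: 'h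
    and D :: "'h \<Rightarrow> ('h \<times> 'h) list" and e :: "'h \<Rightarrow> 'k"
    and S :: "'h \<Rightarrow> 'h" and \<alpha> :: "'h \<Rightarrow> 'h"
    and sA :: "'k \<Rightarrow> 'a::ab_group_add \<Rightarrow> 'a"
    and mA :: "'a \<Rightarrow> 'a \<Rightarrow> 'a" and oneA :: 'a
    and \<rho> :: "'a \<Rightarrow> ('a \<times> 'h) list" and \<beta> :: "'a \<Rightarrow> 'a"
    and \<phi> :: "'h \<Rightarrow> 'a"
  assumes A1: "hom_hopf sH mH oneH D e S \<alpha>"
    and A2: "bij S"
    and A3: "hom_comodule_algebra sH mH oneH D e \<alpha> sA mA oneA \<rho> \<beta>"
    and A4: "total_integral sH oneH D \<alpha> sA oneA \<rho> \<beta> \<phi>"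
    and A5: "\<forall>g h. tensor_eq2 sH sA
           (map (\<lambda>(x, y). (mH g y, x)) (\<rho> (\<phi> h)))
           (map (\<lambda>(x, y). (mH y g, x)) (\<rho> (\<phi> h)))"
    and A6: "\<forall>h. \<phi> h \<in> center mA"
begin

lemma modH: "module sH" using A1 by (simp add: hom_hopf_def hom_algebra_def)
lemma modA: "module sA" using A3 by (simp add: hom_comodule_algebra_def hom_algebra_def)
lemma lin_\<alpha>: "klin sH sH \<alpha>" using A1 by (simp add: hom_hopf_def hom_algebra_def)
lemma bij_\<alpha>: "bij \<alpha>" using A1 by (simp add: hom_hopf_def hom_algebra_def)
lemma bil_m: "bilin sH sH sH mH" using A1 by (simp add: hom_hopf_def hom_algebra_def)
lemma \<alpha>_m: "\<alpha> (mH a b) = mH (\<alpha> a) (\<alpha> b)" using A1 by (simp add: hom_hopf_def hom_algebra_def)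
lemma \<alpha>_one: "\<alpha> oneH = oneH" using A1 by (simp add: hom_hopf_def hom_algebra_def)
lemma hassoc: "mH (\<alpha> a) (mH b c) = mH (mH a b) (\<alpha> c)" using A1 by (simp add: hom_hopf_def hom_algebra_def)
lemma unitR: "mH a oneH = \<alpha> a" using A1 by (simp add: hom_hopf_def hom_algebra_def)
lemma unitL: "mH oneH a = \<alpha> a" using A1 by (simp add: hom_hopf_def hom_algebra_def)
lemma lin_D: "klin_t2 sH sH sH D" using A1 by (simp add: hom_hopf_def hom_coalgebra_def)
lemma lin_e: "klin sH (*) e" using A1 by (simp add: hom_hopf_def hom_coalgebra_def)
lemma D_\<alpha>: "tensor_eq2 sH sH (D (\<alpha> c)) (map (\<lambda>(x, y). (\<alpha> x, \<alpha> y)) (D c))"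
  using A1 by (simp add: hom_hopf_def hom_coalgebra_def)
lemma e_\<alpha>: "e (\<alpha> c) = e c" using A1 by (simp add: hom_hopf_def hom_coalgebra_def)
lemma coassoc: "tensor_eq3 sH sH sH
           (concat (map (\<lambda>(x, y). map (\<lambda>(u, v). (inv \<alpha> x, u, v)) (D y)) (D c)))
           (concat (map (\<lambda>(x, y). map (\<lambda>(u, v). (u, v, \<alpha> y)) (D x)) (D c)))"
  using A1 by (simp add: hom_hopf_def hom_coalgebra_def)
lemma counitL: "sum_list (map (\<lambda>(x, y). sH (e x) y) (D c)) = inv \<alpha> c"
  using A1 by (simp add: hom_hopf_def hom_coalgebra_def)
lemma counitR: "sum_list (map (\<lambda>(x, y). sH (e y) x) (D c)) = inv \<alpha> c"
  using A1 by (simp add: hom_hopf_def hom_coalgebra_def)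
lemma D_m: "tensor_eq2 sH sH (D (mH g h))
        (concat (map (\<lambda>(x, y). map (\<lambda>(x', y'). (mH x x', mH y y')) (D h)) (D g)))"
  using A1 by (simp add: hom_hopf_def)
lemma D_one: "tensor_eq2 sH sH (D oneH) [(oneH, oneH)]" using A1 by (simp add: hom_hopf_def)
lemma e_m: "e (mH g h) = e g * e h" using A1 by (simp add: hom_hopf_def)
lemma e_one: "e oneH = 1" using A1 by (simp add: hom_hopf_def)
lemma lin_S: "klin sH sH S" using A1 by (simp add: hom_hopf_def)
lemma antiL: "sum_list (map (\<lambda>(x, y). mH (S x) y) (D h)) = sH (e h) oneH" using A1 by (simp add: hom_hopf_def)
lemma antiR: "sum_list (map (\<lambda>(x, y). mH x (S y)) (D h)) = sH (e h) oneH" using A1 by (simp add: hom_hopf_def)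
lemma S_\<alpha>: "S (\<alpha> h) = \<alpha> (S h)" using A1 by (simp add: hom_hopf_def)

lemma lin_\<beta>: "klin sA sA \<beta>" using A3 by (simp add: hom_comodule_algebra_def hom_algebra_def)
lemma bij_\<beta>: "bij \<beta>" using A3 by (simp add: hom_comodule_algebra_def hom_algebra_def)
lemma bil_mA: "bilin sA sA sA mA" using A3 by (simp add: hom_comodule_algebra_def hom_algebra_def)
lemma \<beta>_m: "\<beta> (mA a b) = mA (\<beta> a) (\<beta> b)" using A3 by (simp add: hom_comodule_algebra_def hom_algebra_def)
lemma hassocA: "mA (\<beta> a) (mA b c) = mA (mA a b) (\<beta> c)" using A3 by (simp add: hom_comodule_algebra_def hom_algebra_def)
lemma unitRA: "mA a oneA = \<beta> a" using A3 by (simp add: hom_comodule_algebra_def hom_algebra_def)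
lemma unitLA: "mA oneA a = \<beta> a" using A3 by (simp add: hom_comodule_algebra_def hom_algebra_def)
lemma lin_\<rho>: "klin_t2 sA sA sH \<rho>" using A3 by (simp add: hom_comodule_algebra_def hom_comodule_def)
lemma coassoc\<rho>: "tensor_eq3 sA sH sH
        (concat (map (\<lambda>(x, y). map (\<lambda>(u, v). (u, v, inv \<alpha> y)) (\<rho> x)) (\<rho> m)))
        (concat (map (\<lambda>(x, y). map (\<lambda>(p, q). (inv \<beta> x, p, q)) (D y)) (\<rho> m)))"
  using A3 by (simp add: hom_comodule_algebra_def hom_comodule_def)
lemma counit\<rho>: "sum_list (map (\<lambda>(x, y). sA (e y) x) (\<rho> m)) = inv \<beta> m"
  using A3 by (simp add: hom_comodule_algebra_def hom_comodule_def)
lemma lin_\<phi>: "klin sH sA \<phi>" using A4 by (simp add: total_integral_def)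
lemma \<rho>\<phi>: "tensor_eq2 sA sH (\<rho> (\<phi> h)) (map (\<lambda>(x, y). (\<phi> x, y)) (D h))" using A4 by (simp add: total_integral_def)
lemma \<phi>_\<alpha>: "\<phi> (\<alpha> h) = \<beta> (\<phi> h)" using A4 by (simp add: total_integral_def)
lemma \<phi>_one: "\<phi> oneH = oneA" using A4 by (simp add: total_integral_def)
lemma central: "mA (\<phi> h) b = mA b (\<phi> h)" using A6 by (simp add: center_def)

lemma lin_inv\<alpha>: "klin sH sH (inv \<alpha>)" using klin_inv[OF bij_\<alpha> lin_\<alpha>] .
lemma lin_inv\<beta>: "klin sA sA (inv \<beta>)" using klin_inv[OF bij_\<beta> lin_\<beta>] .
lemma \<alpha>_inv[simp]: "\<alpha> (inv \<alpha> x) = x" by (meson bij_\<alpha> bij_inv_eq_iff)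
lemma inv_\<alpha>[simp]: "inv \<alpha> (\<alpha> x) = x" using bij_\<alpha> by (simp add: bij_is_inj)
lemma \<beta>_inv[simp]: "\<beta> (inv \<beta> x) = x" by (meson bij_\<beta> bij_inv_eq_iff)
lemma inv_\<beta>[simp]: "inv \<beta> (\<beta> x) = x" using bij_\<beta> by (simp add: bij_is_inj)
lemma e_inv\<alpha>: "e (inv \<alpha> x) = e x" by (metis \<alpha>_inv e_\<alpha>)


lemma coassoc_sum:
  assumes t: "module t" and g: "trilin sH sH sH t g"
  shows "(\<Sum>(x, y)\<leftarrow>D c. \<Sum>(u, v)\<leftarrow>D y. g (inv \<alpha> x) u v) = (\<Sum>(x, y)\<leftarrow>D c. \<Sum>(u, v)\<leftarrow>D x. g u v (\<alpha> y))"
  using teq3_sum[OF t g coassoc[of c]] by (simp del: map_map add: sl_concat3 sl_map3 sl_map3P)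

lemma \<alpha>\<alpha>[simp]: "\<alpha> (\<alpha> c) = c"
proof -
  define g where "g x u v = sH (e x) (sH (e u) v)" for x u v
  have tri: "trilin sH sH sH sH g" unfolding g_def
    by (intro trilinI klin_scale_lin[OF modH lin_e] klin_scale_const[OF modH] klin_id)
  have "(\<Sum>(x, y)\<leftarrow>D c. \<Sum>(u, v)\<leftarrow>D y. g (inv \<alpha> x) u v) = (\<Sum>(x, y)\<leftarrow>D c. sH (e x) (inv \<alpha> y))"
    by (simp add: g_def sl_scale2[OF modH] counitL e_inv\<alpha>)
  also have "\<dots> = (\<Sum>(x, y)\<leftarrow>D c. inv \<alpha> (sH (e x) y))"
    by (simp add: klin_scale[OF lin_inv\<alpha>])
  also have "\<dots> = inv \<alpha> (inv \<alpha> c)"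
    by (simp add: sl_klin2[OF lin_inv\<alpha>] counitL)
  finally have 1: "(\<Sum>(x, y)\<leftarrow>D c. \<Sum>(u, v)\<leftarrow>D y. g (inv \<alpha> x) u v) = inv \<alpha> (inv \<alpha> c)" .
  have ee: "(\<Sum>(u, v)\<leftarrow>D x. e u * e v) = e x" for x
  proof -
    have "(\<Sum>(u, v)\<leftarrow>D x. e u * e v) = e (\<Sum>(u, v)\<leftarrow>D x. sH (e u) v)"
      by (simp add: sl_klin2[OF lin_e, symmetric] klin_scale[OF lin_e])
    then show ?thesis by (simp add: counitL e_inv\<alpha>)
  qed
  have "(\<Sum>(x, y)\<leftarrow>D c. \<Sum>(u, v)\<leftarrow>D x. g u v (\<alpha> y)) = (\<Sum>(x, y)\<leftarrow>D c. sH (\<Sum>(u, v)\<leftarrow>D x. e u * e v) (\<alpha> y))"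
    by (simp add: g_def module.scale_scale[OF modH] sl_scale2'[OF modH])
  also have "\<dots> = (\<Sum>(x, y)\<leftarrow>D c. \<alpha> (sH (e x) y))"
    by (simp add: ee klin_scale[OF lin_\<alpha>])
  also have "\<dots> = c"
    by (simp add: sl_klin2[OF lin_\<alpha>] counitL)
  finally show ?thesis using 1 coassoc_sum[OF modH tri, of c]
    by (metis \<alpha>_inv)
qed

lemma inv\<alpha>_eq: "inv \<alpha> x = \<alpha> x"
  by (metis \<alpha>\<alpha> \<alpha>_inv)

end


context HH
begin

definition M :: "'h \<Rightarrow> 'h \<Rightarrow> 'h" where "M a b = \<alpha> (mH a b)"

lemma M_alt: "M a b = mH (\<alpha> a) (\<alpha> b)" by (simp add: M_def \<alpha>_m)
lemma mH_M: "mH a b = M (\<alpha> a) (\<alpha> b)" by (simp add: M_alt)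
lemma \<alpha>_M: "\<alpha> (M a b) = M (\<alpha> a) (\<alpha> b)" by (simp add: M_def \<alpha>_m)
lemma M_assoc[simp]: "M (M a b) c = M a (M b c)"
proof -
  have "M (M a b) c = mH (mH a b) (\<alpha> c)" unfolding M_alt[of "M a b" c] by (simp add: M_def)
  also have "\<dots> = mH (\<alpha> a) (mH b c)" by (simp add: hassoc)
  also have "\<dots> = M a (M b c)" unfolding M_alt[of a "M b c"] by (simp add: M_def)
  finally show ?thesis .
qed
lemma M_one[simp]: "M a oneH = a" by (simp add: M_def unitR)
lemma one_M[simp]: "M oneH a = a" by (simp add: M_def unitL)

lemma bil_M: "bilin sH sH sH M"
  unfolding M_def bilin_def
  using bil_m lin_\<alpha> by (auto intro: klin_comp simp: bilin_def)

lemma klin_S: "klin s sH f \<Longrightarrow> klin s sH (\<lambda>x. S (f x))" by (rule klin_comp[OF lin_S])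
lemma klin_\<alpha>: "klin s sH f \<Longrightarrow> klin s sH (\<lambda>x. \<alpha> (f x))" by (rule klin_comp[OF lin_\<alpha>])
lemma klin_M1: "klin s sH f \<Longrightarrow> klin s sH (\<lambda>x. M (f x) c)" by (rule klin_bil1[OF bil_M])
lemma klin_M2: "klin s sH f \<Longrightarrow> klin s sH (\<lambda>x. M c (f x))" by (rule klin_bil2[OF bil_M])
lemma klin_mH1: "klin s sH f \<Longrightarrow> klin s sH (\<lambda>x. mH (f x) c)" by (rule klin_bil1[OF bil_m])
lemma klin_mH2: "klin s sH f \<Longrightarrow> klin s sH (\<lambda>x. mH c (f x))" by (rule klin_bil2[OF bil_m])

lemmas klinH = klin_S klin_\<alpha> klin_M1 klin_M2 klin_mH1 klin_mH2 klin_id klin_sum[OF modH] klin_scale_const[OF modH]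

lemma counitL': "sum_list (map (\<lambda>(x, y). sH (e x) y) (D c)) = \<alpha> c"
  by (simp add: counitL inv\<alpha>_eq)
lemma counitR': "sum_list (map (\<lambda>(x, y). sH (e y) x) (D c)) = \<alpha> c"
  by (simp add: counitR inv\<alpha>_eq)

lemma e_M: "e (M a b) = e a * e b" by (simp add: M_def e_\<alpha> e_m)

lemma antiLM: "sum_list (map (\<lambda>(x, y). M (S x) y) (D h)) = sH (e h) oneH"
  unfolding M_def by (simp add: sl_klin2[OF lin_\<alpha>] antiL klin_scale[OF lin_\<alpha>] \<alpha>_one)
lemma antiRM: "sum_list (map (\<lambda>(x, y). M x (S y)) (D h)) = sH (e h) oneH"
  unfolding M_def by (simp add: sl_klin2[OF lin_\<alpha>] antiR klin_scale[OF lin_\<alpha>] \<alpha>_one)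

lemma S_one: "S oneH = oneH"
proof -
  have b: "bilin sH sH sH (\<lambda>x y. mH (S x) y)"
    by (intro bilinI klinH)
  have "sum_list (map (\<lambda>(x, y). mH (S x) y) (D oneH)) = sum_list (map (\<lambda>(x, y). mH (S x) y) [(oneH, oneH)])"
    by (rule teq2_sum[OF modH b D_one])
  then have "\<alpha> (S oneH) = oneH" using antiL[of oneH] by (simp add: e_one unitR module.scale_one[OF modH])
  then show ?thesis by (metis \<alpha>\<alpha> \<alpha>_one)
qed

lemma D_M: "tensor_eq2 sH sH (D (M g h))
        (concat (map (\<lambda>(x, y). map (\<lambda>(x', y'). (M x x', M y y')) (D h)) (D g)))"
proof -
  have "tensor_eq2 sH sH (D (M g h)) (map (\<lambda>(x, y). (\<alpha> x, \<alpha> y)) (D (mH g h)))"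
    unfolding M_def by (rule D_\<alpha>)
  also have "tensor_eq2 sH sH (map (\<lambda>(x, y). (\<alpha> x, \<alpha> y)) (D (mH g h)))
     (map (\<lambda>(x, y). (\<alpha> x, \<alpha> y)) (concat (map (\<lambda>(x, y). map (\<lambda>(x', y'). (mH x x', mH y y')) (D h)) (D g))))"
    by (rule teq2_map_lin[OF lin_\<alpha> lin_\<alpha> D_m])
  finally show ?thesis
    by (simp add: map_concat comp_def case_prod_beta' M_def)
qed


lemma bilD1: "bilin s1 s2 t F \<Longrightarrow> klin s1 t (\<lambda>x. F x y)" by (simp add: bilin_def)
lemma bilD2: "bilin s1 s2 t F \<Longrightarrow> klin s2 t (F x)" by (simp add: bilin_def)

lemma bil_scale1: "bilin s1 s2 t F \<Longrightarrow> F (s1 k x) y = t k (F x y)" by (simp add: bilin_def klin_def)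
lemma bil_scale2: "bilin s1 s2 t F \<Longrightarrow> F x (s2 k y) = t k (F x y)" by (simp add: bilin_def klin_def)
lemmas M_scale1 = bil_scale1[OF bil_M] and M_scale2 = bil_scale2[OF bil_M]
lemmas mH_scale1 = bil_scale1[OF bil_m] and mH_scale2 = bil_scale2[OF bil_m]

lemma C1:
  assumes t: "module t" and F: "bilin sH sH t F"
  shows "(\<Sum>(p, q)\<leftarrow>D c. \<Sum>(u, v)\<leftarrow>D q. F (M (S (\<alpha> p)) u) v) = F oneH c"
proof -
  define g where "g p' u v = F (M (S p') u) v" for p' u v
  have tri: "trilin sH sH sH t g" unfolding g_def
    apply (intro trilinI)
    apply (rule klin_comp[OF bilD1[OF F]], intro klinH)
    apply (rule klin_comp[OF bilD1[OF F]], intro klinH)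
    apply (rule bilD2[OF F])
    done
  have "(\<Sum>(p, q)\<leftarrow>D c. \<Sum>(u, v)\<leftarrow>D q. F (M (S (\<alpha> p)) u) v) = (\<Sum>(x, y)\<leftarrow>D c. \<Sum>(u, v)\<leftarrow>D x. g u v (\<alpha> y))"
    using coassoc_sum[OF t tri, of c] by (simp add: g_def inv\<alpha>_eq)
  also have "\<dots> = (\<Sum>(x, y)\<leftarrow>D c. F (\<Sum>(u, v)\<leftarrow>D x. M (S u) v) (\<alpha> y))"
    by (simp add: g_def sl_bil1[OF F])
  also have "\<dots> = (\<Sum>(x, y)\<leftarrow>D c. F oneH (\<alpha> (sH (e x) y)))"
    by (simp add: antiLM bil_scale1[OF F] bil_scale2[OF F] klin_scale[OF lin_\<alpha>])
  also have "\<dots> = F oneH c"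
    by (simp add: sl_klin2[OF bilD2[OF F]] sl_klin2[OF lin_\<alpha>] counitL')
  finally show ?thesis .
qed

lemma sumb: "(\<Sum>(x, y)\<leftarrow>D b. sH (e y) (M (S (\<alpha> x)) Z)) = M (S b) Z"
proof -
  have "(\<Sum>(x, y)\<leftarrow>D b. sH (e y) (M (S (\<alpha> x)) Z)) = (\<Sum>(x, y)\<leftarrow>D b. M (S (\<alpha> (sH (e y) x))) Z)"
    by (simp add: klin_scale[OF lin_\<alpha>] klin_scale[OF lin_S] M_scale1 M_scale2)
  also have "\<dots> = M (S b) Z"
    by (simp add: sl_bil1[OF bil_M] sl_klin2[OF lin_S] sl_klin2[OF lin_\<alpha>] counitR')
  finally show ?thesis .
qed

lemma suma: "(\<Sum>(x, y)\<leftarrow>D a. sH (e y) (M Z (S (\<alpha> x)))) = M Z (S a)"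
proof -
  have "(\<Sum>(x, y)\<leftarrow>D a. sH (e y) (M Z (S (\<alpha> x)))) = (\<Sum>(x, y)\<leftarrow>D a. M Z (S (\<alpha> (sH (e y) x))))"
    by (simp add: klin_scale[OF lin_\<alpha>] klin_scale[OF lin_S] M_scale1 M_scale2)
  also have "\<dots> = M Z (S a)"
    by (simp add: sl_bil2[OF bil_M] sl_klin2[OF lin_S] sl_klin2[OF lin_\<alpha>] counitR')
  finally show ?thesis .
qed


lemma S_M: "S (M a b) = M (S b) (S a)"
proof -
  define G where "G a1 x y b1 b2 = (\<Sum>(x', y')\<leftarrow>D b2. M (S (\<alpha> b1)) (M (S (\<alpha> a1)) (M x (M x' (S (M y y'))))))"
    for a1 x y b1 b2
  define E where "E = (\<Sum>(a1, a2)\<leftarrow>D a. \<Sum>(x, y)\<leftarrow>D a2. \<Sum>(b1, b2)\<leftarrow>D b. G a1 x y b1 b2)"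
  define F where "F p y = (\<Sum>(b1, b2)\<leftarrow>D b. \<Sum>(x', y')\<leftarrow>D b2. M (S (\<alpha> b1)) (M p (M x' (S (M y y')))))" for p y
  define F2 where "F2 p y' = M p (S (M a y'))" for p y'
  have bF: "bilin sH sH sH F" unfolding F_def by (intro bilinI klinH)
  have bF2: "bilin sH sH sH F2" unfolding F2_def by (intro bilinI klinH)
  have "E = (\<Sum>(a1, a2)\<leftarrow>D a. \<Sum>(x, y)\<leftarrow>D a2. F (M (S (\<alpha> a1)) x) y)"
    by (simp add: E_def G_def F_def)
  also have "\<dots> = F oneH a" by (rule C1[OF modH bF])
  also have "\<dots> = (\<Sum>(b1, b2)\<leftarrow>D b. \<Sum>(x', y')\<leftarrow>D b2. F2 (M (S (\<alpha> b1)) x') y')"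
    by (simp add: F_def F2_def)
  also have "\<dots> = F2 oneH b" by (rule C1[OF modH bF2])
  finally have E1: "E = S (M a b)" by (simp add: F2_def)
  have sw: "(\<Sum>(x, y)\<leftarrow>D a2. \<Sum>(b1, b2)\<leftarrow>D b. G a1 x y b1 b2) = (\<Sum>(b1, b2)\<leftarrow>D b. \<Sum>(x, y)\<leftarrow>D a2. G a1 x y b1 b2)"
    for a1 a2 by (rule sl_swap2)
  have bil2: "bilin sH sH sH (\<lambda>x y. M x (S y))" by (intro bilinI klinH)
  have inner: "(\<Sum>(c1, c2)\<leftarrow>D (M a2 b2). M c1 (S c2)) = (\<Sum>(x, y)\<leftarrow>D a2. \<Sum>(x', y')\<leftarrow>D b2. M (M x x') (S (M y y')))"
    for a2 b2
    using teq2_sum[OF modH bil2 D_M[of a2 b2]] by (simp del: map_map add: sl_concat2 sl_map2)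
  have "E = (\<Sum>(a1, a2)\<leftarrow>D a. \<Sum>(b1, b2)\<leftarrow>D b. \<Sum>(x, y)\<leftarrow>D a2. G a1 x y b1 b2)"
    by (simp add: E_def sw)
  also have "\<dots> = (\<Sum>(a1, a2)\<leftarrow>D a. \<Sum>(b1, b2)\<leftarrow>D b. M (M (S (\<alpha> b1)) (S (\<alpha> a1))) (\<Sum>(c1, c2)\<leftarrow>D (M a2 b2). M c1 (S c2)))"
    by (simp add: inner G_def sl_bil2[OF bil_M, symmetric])
  also have "\<dots> = (\<Sum>(a1, a2)\<leftarrow>D a. \<Sum>(b1, b2)\<leftarrow>D b. sH (e a2) (sH (e b2) (M (S (\<alpha> b1)) (S (\<alpha> a1)))))"
    by (simp add: antiRM e_M M_scale2 module.scale_scale[OF modH])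
  also have "\<dots> = (\<Sum>(a1, a2)\<leftarrow>D a. sH (e a2) (M (S b) (S (\<alpha> a1))))"
    by (simp add: sl_scale2[OF modH] sumb)
  also have "\<dots> = M (S b) (S a)" by (rule suma)
  finally show ?thesis using E1 by simp
qed

end


context HH
begin

definition T :: "'h \<Rightarrow> 'h" where "T = inv S"

lemma S_T[simp]: "S (T x) = x" unfolding T_def by (meson A2 bij_inv_eq_iff)
lemma T_S[simp]: "T (S x) = x" unfolding T_def using A2 by (simp add: bij_is_inj)
lemma lin_T: "klin sH sH T" unfolding T_def by (rule klin_inv[OF A2 lin_S])
lemma T_M: "T (M a b) = M (T b) (T a)" by (metis S_M S_T T_S)
lemma T_\<alpha>: "T (\<alpha> x) = \<alpha> (T x)" by (metis S_T T_S S_\<alpha>)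
lemma T_one: "T oneH = oneH" by (metis S_one T_S)
lemma S_mH: "S (mH a b) = mH (S b) (S a)" by (simp add: mH_M S_M S_\<alpha>)
lemma T_mH: "T (mH a b) = mH (T b) (T a)" by (simp add: mH_M T_M T_\<alpha>)
lemma klin_T: "klin s sH f \<Longrightarrow> klin s sH (\<lambda>x. T (f x))" by (rule klin_comp[OF lin_T])

lemma P1M: "(\<Sum>(x, y)\<leftarrow>D h. M y (T x)) = sH (e h) oneH"
proof -
  have "(\<Sum>(x, y)\<leftarrow>D h. M y (T x)) = T (\<Sum>(x, y)\<leftarrow>D h. M x (S y))"
    by (simp add: sl_klin2[OF lin_T, symmetric] T_M)
  then show ?thesis by (simp add: antiRM klin_scale[OF lin_T] T_one)
qed

lemma P2M: "(\<Sum>(x, y)\<leftarrow>D h. M (T y) x) = sH (e h) oneH"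
proof -
  have "(\<Sum>(x, y)\<leftarrow>D h. M (T y) x) = T (\<Sum>(x, y)\<leftarrow>D h. M (S x) y)"
    by (simp add: sl_klin2[OF lin_T, symmetric] T_M)
  then show ?thesis by (simp add: antiLM klin_scale[OF lin_T] T_one)
qed

end


context HH
begin

definition \<theta> where "\<theta> g h = \<phi> (mH h (T g))"

lemma klin_\<phi>: "klin s sH f \<Longrightarrow> klin s sA (\<lambda>x. \<phi> (f x))" by (rule klin_comp[OF lin_\<phi>])

lemma bil_\<theta>: "bilin sH sH sA \<theta>"
  unfolding \<theta>_def by (intro bilinI klin_\<phi> klin_T klinH)

lemma \<theta>_\<alpha>: "\<theta> (\<alpha> g) (\<alpha> h) = \<beta> (\<theta> g h)"
  by (simp add: \<theta>_def T_\<alpha> \<alpha>_m[symmetric] \<phi>_\<alpha>)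

lemma mH_\<alpha>M: "mH a b = \<alpha> (M a b)" by (simp add: M_def)

lemma \<theta>_norm: "(\<Sum>(x, y)\<leftarrow>D h. \<theta> x y) = sA (e h) oneA"
proof -
  have "(\<Sum>(x, y)\<leftarrow>D h. \<theta> x y) = \<phi> (\<alpha> (\<Sum>(x, y)\<leftarrow>D h. M y (T x)))"
    by (simp add: \<theta>_def sl_klin2[OF lin_\<phi>] sl_klin2[OF lin_\<alpha>] mH_\<alpha>M)
  then show ?thesis
    by (simp add: P1M klin_scale[OF lin_\<alpha>] klin_scale[OF lin_\<phi>] \<alpha>_one \<phi>_one)
qed

lemma coassoc\<rho>_sum:
  assumes t: "module t" and g: "trilin sA sH sH t g"
  shows "(\<Sum>(x, y)\<leftarrow>\<rho> m. \<Sum>(u, v)\<leftarrow>\<rho> x. g u v (\<alpha> y)) = (\<Sum>(x, y)\<leftarrow>\<rho> m. \<Sum>(p, q)\<leftarrow>D y. g (inv \<beta> x) p q)"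
  using teq3_sum[OF t g coassoc\<rho>[of m]] by (simp del: map_map add: sl_concat3 sl_map3 sl_map3P inv\<alpha>_eq)

lemma klin_mA1: "klin s sA f \<Longrightarrow> klin s sA (\<lambda>x. mA (f x) c)" by (rule klin_bil1[OF bil_mA])
lemma klin_mA2: "klin s sA f \<Longrightarrow> klin s sA (\<lambda>x. mA c (f x))" by (rule klin_bil2[OF bil_mA])
lemma klin_\<beta>: "klin s sA f \<Longrightarrow> klin s sA (\<lambda>x. \<beta> (f x))" by (rule klin_comp[OF lin_\<beta>])
lemmas mA_scale1 = bil_scale1[OF bil_mA] and mA_scale2 = bil_scale2[OF bil_mA]

lemma \<theta>_mod: "(\<Sum>(x, y)\<leftarrow>\<rho> a. \<Sum>(u, v)\<leftarrow>\<rho> x.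
          mA (\<beta> (\<beta> u)) (\<theta> (mH (\<alpha> g) v) (mH (\<alpha> h) (\<alpha> y)))) = mA (\<theta> g h) a"
proof -
  define \<Psi> where "\<Psi> u v w = mA (\<beta> (\<beta> u)) (\<phi> (M (\<alpha> h) (M w (M (T v) (\<alpha> (T g))))))" for u v w
  have tri: "trilin sA sH sH sA \<Psi>" unfolding \<Psi>_def
    by (intro trilinI klin_mA1 klin_mA2 klin_\<beta> klin_\<phi> klinH klin_T klin_id)
  have hpart: "mH (mH (\<alpha> h) (\<alpha> y)) (T (mH (\<alpha> g) v)) = M (\<alpha> h) (M (\<alpha> y) (M (T v) (\<alpha> (T g))))" for y v
    by (simp add: mH_M T_M T_\<alpha> \<alpha>_M)
  have "(\<Sum>(x, y)\<leftarrow>\<rho> a. \<Sum>(u, v)\<leftarrow>\<rho> x. mA (\<beta> (\<beta> u)) (\<theta> (mH (\<alpha> g) v) (mH (\<alpha> h) (\<alpha> y))))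
      = (\<Sum>(x, y)\<leftarrow>\<rho> a. \<Sum>(u, v)\<leftarrow>\<rho> x. \<Psi> u v (\<alpha> y))"
    by (simp add: \<theta>_def hpart \<Psi>_def)
  also have "\<dots> = (\<Sum>(x, y)\<leftarrow>\<rho> a. \<Sum>(p, q)\<leftarrow>D y. \<Psi> (inv \<beta> x) p q)"
    by (rule coassoc\<rho>_sum[OF modA tri])
  also have "\<dots> = (\<Sum>(x, y)\<leftarrow>\<rho> a. mA (\<beta> x) (\<phi> (M (\<alpha> h) (M (\<Sum>(p, q)\<leftarrow>D y. M q (T p)) (\<alpha> (T g))))))"
    by (simp add: \<Psi>_def sl_bil2[OF bil_mA] sl_klin2[OF lin_\<phi>] sl_bil2[OF bil_M] sl_bil1[OF bil_M, symmetric])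
  also have "\<dots> = (\<Sum>(x, y)\<leftarrow>\<rho> a. mA (\<beta> (sA (e y) x)) (\<phi> (M (\<alpha> h) (\<alpha> (T g)))))"
    by (simp add: P1M M_scale1 M_scale2 klin_scale[OF lin_\<phi>] klin_scale[OF lin_\<beta>] mA_scale1 mA_scale2)
  also have "\<dots> = mA a (\<theta> g h)"
    by (simp add: sl_bil1[OF bil_mA] sl_klin2[OF lin_\<beta>] counit\<rho> \<theta>_def mH_M)
  also have "\<dots> = mA (\<theta> g h) a" by (simp add: \<theta>_def central)
  finally show ?thesis .
qed

end


lemma teq2_zeroL: "tensor_eq2 s1 s2 [(0, b)] []"
proof -
  have "tensor_eq2 s1 s2 [(0 + 0, b)] [(0, b), (0, b)]" by (rule teq2_addL)
  then have "(\<lambda>p. fsum [(0, b)] p - fsum [(0, b), (0, b)] p) \<in> kspan (tensor2_rel s1 s2)"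
    unfolding tensor_eq2_def by simp
  from kspan_smult[OF this, of "-1"] show ?thesis unfolding tensor_eq2_def by (simp add: fsum_Cons)
qed
lemma teq2_zeroR: "tensor_eq2 s1 s2 [(a, 0)] []"
proof -
  have "tensor_eq2 s1 s2 [(a, 0 + 0)] [(a, 0), (a, 0)]" by (rule teq2_addR)
  then have "(\<lambda>p. fsum [(a, 0)] p - fsum [(a, 0), (a, 0)] p) \<in> kspan (tensor2_rel s1 s2)"
    unfolding tensor_eq2_def by simp
  from kspan_smult[OF this, of "-1"] show ?thesis unfolding tensor_eq2_def by (simp add: fsum_Cons)
qed

lemma teq2_perm2: "fsum ys = (fsum zs :: _ \<Rightarrow> 'k) \<Longrightarrow> tensor_eq2 s1 s2 xs ys \<Longrightarrow> tensor_eq2 s1 s2 xs zs"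
  for s1 :: "'k::comm_ring_1 \<Rightarrow> _"
  by (simp add: tensor_eq2_def)

lemma teq2_Cons: "tensor_eq2 s1 s2 [x] [y] \<Longrightarrow> tensor_eq2 s1 s2 xs ys \<Longrightarrow> tensor_eq2 s1 s2 (x # xs) (y # ys)"
  using teq2_append[of s1 s2 "[x]" "[y]" xs ys] by simp

lemma teq2_perm: "fsum xs = (fsum ys :: _ \<Rightarrow> 'k) \<Longrightarrow> tensor_eq2 s1 s2 xs zs \<Longrightarrow> tensor_eq2 s1 s2 ys zs"
  for s1 :: "'k::comm_ring_1 \<Rightarrow> _"
  by (simp add: tensor_eq2_def)

lemma tsumL: "tensor_eq2 s1 s2 (concat (map (\<lambda>(u, v). [(f u v, b)]) L)) [(\<Sum>(u, v)\<leftarrow>L. f u v, b)]"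
proof (induction L)
  case Nil then show ?case using teq2_sym[OF teq2_zeroL] by simp
next
  case (Cons a L)
  obtain u v where a: "a = (u, v)" by force
  have "tensor_eq2 s1 s2 ((f u v, b) # concat (map (\<lambda>(u, v). [(f u v, b)]) L)) ((f u v, b) # [(\<Sum>(u, v)\<leftarrow>L. f u v, b)])"
    by (rule teq2_Cons[OF teq2_refl Cons.IH])
  also have "tensor_eq2 s1 s2 ((f u v, b) # [(\<Sum>(u, v)\<leftarrow>L. f u v, b)]) [(f u v + (\<Sum>(u, v)\<leftarrow>L. f u v), b)]"
    by (rule teq2_sym[OF teq2_addL])
  finally show ?case by (simp add: a)
qed

lemma tsumR: "tensor_eq2 s1 s2 (concat (map (\<lambda>(u, v). [(b, f u v)]) L)) [(b, \<Sum>(u, v)\<leftarrow>L. f u v)]"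
proof (induction L)
  case Nil then show ?case using teq2_sym[OF teq2_zeroR] by simp
next
  case (Cons a L)
  obtain u v where a: "a = (u, v)" by force
  have "tensor_eq2 s1 s2 ((b, f u v) # concat (map (\<lambda>(u, v). [(b, f u v)]) L)) ((b, f u v) # [(b, \<Sum>(u, v)\<leftarrow>L. f u v)])"
    by (rule teq2_Cons[OF teq2_refl Cons.IH])
  also have "tensor_eq2 s1 s2 ((b, f u v) # [(b, \<Sum>(u, v)\<leftarrow>L. f u v)]) [(b, f u v + (\<Sum>(u, v)\<leftarrow>L. f u v))]"
    by (rule teq2_sym[OF teq2_addR])
  finally show ?case by (simp add: a)
qed

lemma teq2_map_addL: "tensor_eq2 s1 s2 (map (\<lambda>b. (f1 b + f2 b, g b)) B) (map (\<lambda>b. (f1 b, g b)) B @ map (\<lambda>b. (f2 b, g b)) B)"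
proof (induction B)
  case Nil then show ?case by (simp add: teq2_refl)
next
  case (Cons b B)
  have "tensor_eq2 s1 s2 ([(f1 b + f2 b, g b)] @ map (\<lambda>b. (f1 b + f2 b, g b)) B)
     ([(f1 b, g b), (f2 b, g b)] @ (map (\<lambda>b. (f1 b, g b)) B @ map (\<lambda>b. (f2 b, g b)) B))"
    by (rule teq2_append[OF teq2_addL Cons.IH])
  then have "tensor_eq2 s1 s2 (map (\<lambda>b. (f1 b + f2 b, g b)) (b # B)) ([(f1 b, g b), (f2 b, g b)] @ (map (\<lambda>b. (f1 b, g b)) B @ map (\<lambda>b. (f2 b, g b)) B))"
    by simp
  then show ?case
    by (rule teq2_perm2[rotated]) (simp add: fsum_Cons fsum_append fun_eq_iff algebra_simps)
qed

lemma teq2_map_addR: "tensor_eq2 s1 s2 (map (\<lambda>b. (g b, f1 b + f2 b)) B) (map (\<lambda>b. (g b, f1 b)) B @ map (\<lambda>b. (g b, f2 b)) B)"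
proof (induction B)
  case Nil then show ?case by (simp add: teq2_refl)
next
  case (Cons b B)
  have "tensor_eq2 s1 s2 ([(g b, f1 b + f2 b)] @ map (\<lambda>b. (g b, f1 b + f2 b)) B)
     ([(g b, f1 b), (g b, f2 b)] @ (map (\<lambda>b. (g b, f1 b)) B @ map (\<lambda>b. (g b, f2 b)) B))"
    by (rule teq2_append[OF teq2_addR Cons.IH])
  then have "tensor_eq2 s1 s2 (map (\<lambda>b. (g b, f1 b + f2 b)) (b # B)) ([(g b, f1 b), (g b, f2 b)] @ (map (\<lambda>b. (g b, f1 b)) B @ map (\<lambda>b. (g b, f2 b)) B))"
    by simp
  then show ?case
    by (rule teq2_perm2[rotated]) (simp add: fsum_Cons fsum_append fun_eq_iff algebra_simps)
qed

lemma teq2_map_scR: "tensor_eq2 s1 s2 (map (\<lambda>b. (f b, s2 c (g b))) B) (map (\<lambda>b. (s1 c (f b), g b)) B)"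
  by (induction B) (auto simp: teq2_refl intro!: teq2_Cons teq2_scR)


lemma concat_concat': "concat (concat xss) = concat (map concat xss)"
  by (induction xss) auto

lemma klin_t2_single1: "klin s t1 f \<Longrightarrow> klin_t2 s t1 t2 (\<lambda>x. [(f x, b)])"
  unfolding klin_t2_def by (auto simp: klin_add klin_scale teq2_addL teq2_refl)
lemma klin_t2_single2: "klin s t2 g \<Longrightarrow> klin_t2 s t1 t2 (\<lambda>x. [(a, g x)])"
  unfolding klin_t2_def by (auto simp: klin_add klin_scale teq2_addR teq2_scR)
lemma klin_t2_comp: "klin_t2 s' t1 t2 L \<Longrightarrow> klin s s' f \<Longrightarrow> klin_t2 s t1 t2 (\<lambda>x. L (f x))"
  unfolding klin_t2_def by (auto simp: klin_add klin_scale)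

lemma fsum_concat_app: "fsum (concat (map (\<lambda>z. A z @ B z) Z)) = (fsum (concat (map A Z) @ concat (map B Z)) :: _ \<Rightarrow> 'k::comm_ring_1)"
  by (induction Z) (auto simp: fsum_append fun_eq_iff algebra_simps)

lemma klin_t2_concat:
  assumes "\<And>u v. klin_t2 s t1 t2 (\<lambda>x. F x u v)"
  shows "klin_t2 s t1 t2 (\<lambda>x. concat (map (\<lambda>(u, v). F x u v) Z))"
  unfolding klin_t2_def
proof (intro conjI allI)
  fix x y
  have "tensor_eq2 t1 t2 (concat (map (\<lambda>(u, v). F (x + y) u v) Z)) (concat (map (\<lambda>z. (\<lambda>(u, v). F x u v) z @ (\<lambda>(u, v). F y u v) z) Z))"
    using assms unfolding klin_t2_def by (intro teq2_concat) (auto split: prod.splits)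
  then show "tensor_eq2 t1 t2 (concat (map (\<lambda>(u, v). F (x + y) u v) Z)) (concat (map (\<lambda>(u, v). F x u v) Z) @ concat (map (\<lambda>(u, v). F y u v) Z))"
    by (rule teq2_perm2[rotated]) (rule fsum_concat_app)
next
  fix c x
  have "tensor_eq2 t1 t2 (concat (map (\<lambda>(u, v). F (s c x) u v) Z)) (concat (map (\<lambda>z. map (\<lambda>(u, v). (t1 c u, v)) ((\<lambda>(u, v). F x u v) z)) Z))"
    using assms unfolding klin_t2_def by (intro teq2_concat) (auto split: prod.splits)
  then show "tensor_eq2 t1 t2 (concat (map (\<lambda>(u, v). F (s c x) u v) Z)) (map (\<lambda>(u, v). (t1 c u, v)) (concat (map (\<lambda>(u, v). F x u v) Z)))"
    by (simp add: map_concat comp_def)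
qed

lemma klin_t2_concatL:
  assumes D: "klin_t2 s s1 s2 D" and F: "tbil s1 s2 t1 t2 F"
  shows "klin_t2 s t1 t2 (\<lambda>x. concat (map (\<lambda>(u, v). F u v) (D x)))"
  unfolding klin_t2_def
proof (intro conjI allI)
  fix x y
  have "tensor_eq2 t1 t2 (concat (map (\<lambda>(u, v). F u v) (D (x + y)))) (concat (map (\<lambda>(u, v). F u v) (D x @ D y)))"
    using D unfolding klin_t2_def by (intro teq2_map[OF _ F]) auto
  then show "tensor_eq2 t1 t2 (concat (map (\<lambda>(u, v). F u v) (D (x + y)))) (concat (map (\<lambda>(u, v). F u v) (D x)) @ concat (map (\<lambda>(u, v). F u v) (D y)))"
    by simp
next
  fix c x
  have "tensor_eq2 t1 t2 (concat (map (\<lambda>(u, v). F u v) (D (s c x)))) (concat (map (\<lambda>(u, v). F u v) (map (\<lambda>(u, v). (s1 c u, v)) (D x))))"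
    using D unfolding klin_t2_def by (intro teq2_map[OF _ F]) auto
  also have "concat (map (\<lambda>(u, v). F u v) (map (\<lambda>(u, v). (s1 c u, v)) (D x))) = concat (map (\<lambda>(u, v). F (s1 c u) v) (D x))"
    by (simp add: comp_def case_prod_beta')
  also have "tensor_eq2 t1 t2 \<dots> (concat (map (\<lambda>z. map (\<lambda>(u, v). (t1 c u, v)) ((\<lambda>(u, v). F u v) z)) (D x)))"
    using F unfolding tbil_def by (intro teq2_concat) (auto split: prod.splits)
  finally show "tensor_eq2 t1 t2 (concat (map (\<lambda>(u, v). F u v) (D (s c x)))) (map (\<lambda>(u, v). (t1 c u, v)) (concat (map (\<lambda>(u, v). F u v) (D x))))"
    by (simp add: map_concat comp_def)
qed

lemma klin_t2_map:
  assumes L: "klin_t2 s s1 s2 L" and f: "klin s1 t1 f" and g: "klin s2 t2 g"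
  shows "klin_t2 s t1 t2 (\<lambda>x. map (\<lambda>(u, v). (f u, g v)) (L x))"
  unfolding klin_t2_def
proof (intro conjI allI)
  fix x y
  show "tensor_eq2 t1 t2 (map (\<lambda>(u, v). (f u, g v)) (L (x + y))) (map (\<lambda>(u, v). (f u, g v)) (L x) @ map (\<lambda>(u, v). (f u, g v)) (L y))"
    using teq2_map_lin[OF f g, of "L (x + y)" "L x @ L y"] L unfolding klin_t2_def by auto
next
  fix c x
  have "tensor_eq2 t1 t2 (map (\<lambda>(u, v). (f u, g v)) (L (s c x))) (map (\<lambda>(u, v). (f u, g v)) (map (\<lambda>(u, v). (s1 c u, v)) (L x)))"
    using teq2_map_lin[OF f g, of "L (s c x)" "map (\<lambda>(u, v). (s1 c u, v)) (L x)"] L unfolding klin_t2_def by blast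
  then show "tensor_eq2 t1 t2 (map (\<lambda>(u, v). (f u, g v)) (L (s c x))) (map (\<lambda>(u, v). (t1 c u, v)) (map (\<lambda>(u, v). (f u, g v)) (L x)))"
    using f by (simp add: comp_def case_prod_beta' klin_scale)
qed

lemma tbil_of: "(\<And>y. klin_t2 s1 t1 t2 (\<lambda>x. F x y)) \<Longrightarrow> (\<And>x. klin_t2 s2 t1 t2 (F x)) \<Longrightarrow> tbil s1 s2 t1 t2 F"
  unfolding tbil_def klin_t2_def by blast
lemma ttri_of: "(\<And>y z. klin_t2 s1 t1 t2 (\<lambda>x. F x y z)) \<Longrightarrow> (\<And>x z. klin_t2 s2 t1 t2 (\<lambda>y. F x y z)) \<Longrightarrow>
   (\<And>x y. klin_t2 s3 t1 t2 (F x y)) \<Longrightarrow> ttri s1 s2 s3 t1 t2 F"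
  unfolding ttri_def klin_t2_def by blast

context HH
begin

definition pr :: "('h \<times> 'h) list \<Rightarrow> ('h \<times> 'h) list \<Rightarrow> ('h \<times> 'h) list" where
  "pr A B = concat (map (\<lambda>(x, y). map (\<lambda>(x', y'). (M x x', M y y')) B) A)"

abbreviation teH where "teH \<equiv> tensor_eq2 sH sH"
abbreviation tl where "tl \<equiv> klin_t2 sH sH sH"

lemma pr_Nil1[simp]: "pr [] B = []" by (simp add: pr_def)
lemma pr_append1: "pr (A @ A') B = pr A B @ pr A' B" by (simp add: pr_def)
lemma pr_Cons1: "pr ((x, y) # A) B = map (\<lambda>(x', y'). (M x x', M y y')) B @ pr A B" by (simp add: pr_def)
lemma pr_single2: "pr A [(a, b)] = map (\<lambda>(x, y). (M x a, M y b)) A"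
  by (induction A) (auto simp: pr_def)
lemma pr_single1: "pr [(a, b)] B = map (\<lambda>(x, y). (M a x, M b y)) B"
  by (simp add: pr_def)

lemma fsum_pr_append2: "fsum (pr A (B @ B')) = fsum (pr A B @ pr A B')"
  by (induction A) (auto simp: pr_def fsum_append fun_eq_iff algebra_simps)

lemma pr_append2: "teH (pr A (B @ B')) (pr A B @ pr A B')"
  by (rule teq2_eqI[OF fsum_pr_append2])

lemma pr_assoc: "pr (pr A B) C = pr A (pr B C)"
  by (induction A) (auto simp: pr_def map_concat comp_def case_prod_beta')

lemma pr_scale1: "pr (map (\<lambda>(u, v). (sH c u, v)) A) B = map (\<lambda>(u, v). (sH c u, v)) (pr A B)"
  by (induction A) (auto simp: pr_def M_scale1 comp_def case_prod_beta')
lemma pr_scale2: "pr A (map (\<lambda>(u, v). (sH c u, v)) B) = map (\<lambda>(u, v). (sH c u, v)) (pr A B)"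
  by (induction A) (auto simp: pr_def M_scale2 comp_def case_prod_beta')

lemma pr_cong2: "teH B B' \<Longrightarrow> teH (pr A B) (pr A B')"
  unfolding pr_def
  by (rule teq2_concat) (auto intro!: teq2_map_lin[where f="M _" and g="M _"] klinH)

lemma tbil_pr1: "tbil sH sH sH sH (\<lambda>x y. pr [(x, y)] B)"
  unfolding tbil_def pr_single1
proof (intro conjI allI)
  fix m m' n
  show "teH (map (\<lambda>(x, y). (M (m + m') x, M n y)) B) (map (\<lambda>(x, y). (M m x, M n y)) B @ map (\<lambda>(x, y). (M m' x, M n y)) B)"
    using teq2_map_addL[of sH sH "\<lambda>(x, y). M m x" "\<lambda>(x, y). M m' x" "\<lambda>(x, y). M n y" B]
    by (simp add: klin_add[OF bilD1[OF bil_M]] case_prod_beta')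
next
  fix m n n'
  show "teH (map (\<lambda>(x, y). (M m x, M (n + n') y)) B) (map (\<lambda>(x, y). (M m x, M n y)) B @ map (\<lambda>(x, y). (M m x, M n' y)) B)"
    using teq2_map_addR[of sH sH "\<lambda>(x, y). M m x" "\<lambda>(x, y). M n y" "\<lambda>(x, y). M n' y" B]
    by (simp add: klin_add[OF bilD1[OF bil_M]] case_prod_beta')
next
  fix c m n
  show "teH (map (\<lambda>(x, y). (M (sH c m) x, M n y)) B) (map (\<lambda>(u, v). (sH c u, v)) (map (\<lambda>(x, y). (M m x, M n y)) B))"
    by (simp add: M_scale1 comp_def case_prod_beta' teq2_refl)
next
  fix c m n
  show "teH (map (\<lambda>(x, y). (M m x, M (sH c n) y)) B) (map (\<lambda>(u, v). (sH c u, v)) (map (\<lambda>(x, y). (M m x, M n y)) B))"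
    using teq2_map_scR[of sH sH "\<lambda>(x, y). M m x" c "\<lambda>(x, y). M n y" B]
    by (simp add: M_scale1 comp_def case_prod_beta')
qed

lemma pr_cong1: "teH A A' \<Longrightarrow> teH (pr A B) (pr A' B)"
proof -
  assume "teH A A'"
  from teq2_map[OF this tbil_pr1[of B]] show ?thesis
    by (simp add: pr_def)
qed

lemma pr_cong: "teH A A' \<Longrightarrow> teH B B' \<Longrightarrow> teH (pr A B) (pr A' B')"
  by (meson pr_cong1 pr_cong2 teq2_trans)


lemma tl_pr1: "klin_t2 s sH sH L \<Longrightarrow> klin_t2 s sH sH (\<lambda>x. pr (L x) B)"
  unfolding klin_t2_def by (auto simp: pr_append1[symmetric] pr_scale1[symmetric] intro: pr_cong1)
lemma tl_pr2: "klin_t2 s sH sH L \<Longrightarrow> klin_t2 s sH sH (\<lambda>x. pr A (L x))"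
  unfolding klin_t2_def by (auto simp: pr_scale2[symmetric] intro: pr_cong2 teq2_trans[OF _ pr_append2])

lemma coassoc_t:
  assumes F: "ttri sH sH sH t1 t2 F"
  shows "tensor_eq2 t1 t2 (concat (map (\<lambda>(x, y). concat (map (\<lambda>(u, v). F (\<alpha> x) u v) (D y))) (D c)))
     (concat (map (\<lambda>(x, y). concat (map (\<lambda>(u, v). F u v (\<alpha> y)) (D x))) (D c)))"
  using teq3_map[OF coassoc[of c] F]
  by (simp add: map_concat comp_def case_prod_beta' inv\<alpha>_eq concat_concat')

end


lemma concat_single2: "concat (map (\<lambda>(c, d). [f c d]) L) = map (\<lambda>(c, d). f c d) L"
  by (induction L) auto

lemma klin_t2_zero: "klin_t2 s t1 t2 L \<Longrightarrow> tensor_eq2 t1 t2 (L 0) []"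
proof -
  assume L: "klin_t2 s t1 t2 L"
  then have "tensor_eq2 t1 t2 (L (0 + 0)) (L 0 @ L 0)" unfolding klin_t2_def by blast
  then have "(\<lambda>p. fsum (L 0) p - fsum (L 0 @ L 0) p) \<in> kspan (tensor2_rel t1 t2)"
    unfolding tensor_eq2_def by simp
  from kspan_smult[OF this, of "-1"] show ?thesis unfolding tensor_eq2_def by (simp add: fsum_append)
qed

lemma klin_t2_sum:
  assumes L: "klin_t2 s t1 t2 L"
  shows "tensor_eq2 t1 t2 (concat (map (\<lambda>(u, v). L (f u v)) Z)) (L (\<Sum>(u, v)\<leftarrow>Z. f u v))"
proof (induction Z)
  case Nil then show ?case using teq2_sym[OF klin_t2_zero[OF L]] by simp
next
  case (Cons a Z)
  obtain u v where a: "a = (u, v)" by force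
  have "tensor_eq2 t1 t2 (L (f u v) @ concat (map (\<lambda>(u, v). L (f u v)) Z)) (L (f u v) @ L (\<Sum>(u, v)\<leftarrow>Z. f u v))"
    by (rule teq2_append[OF teq2_refl Cons.IH])
  also have "tensor_eq2 t1 t2 (L (f u v) @ L (\<Sum>(u, v)\<leftarrow>Z. f u v)) (L (f u v + (\<Sum>(u, v)\<leftarrow>Z. f u v)))"
    using L unfolding klin_t2_def by (blast intro: teq2_sym)
  finally show ?case by (simp add: a)
qed

lemma klin_t2_scale: "klin_t2 s t1 t2 L \<Longrightarrow> tensor_eq2 t1 t2 (map (\<lambda>(u, v). (t1 c u, v)) (L x)) (L (s c x))"
  unfolding klin_t2_def by (blast intro: teq2_sym)

lemma klin_t2_mapswap:
  assumes L: "klin_t2 s s1 s2 L" and f: "klin s1 t2 f" and g: "klin s2 t1 g"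
  shows "klin_t2 s t1 t2 (\<lambda>x. map (\<lambda>(u, v). (g v, f u)) (L x))"
  unfolding klin_t2_def
proof (intro conjI allI)
  fix x y
  show "tensor_eq2 t1 t2 (map (\<lambda>(u, v). (g v, f u)) (L (x + y))) (map (\<lambda>(u, v). (g v, f u)) (L x) @ map (\<lambda>(u, v). (g v, f u)) (L y))"
    using teq2_map_swap[OF f g, of "L (x + y)" "L x @ L y"] L unfolding klin_t2_def by auto
next
  fix c x
  have "tensor_eq2 t1 t2 (map (\<lambda>(u, v). (g v, f u)) (L (s c x))) (map (\<lambda>(u, v). (g v, f u)) (map (\<lambda>(u, v). (s1 c u, v)) (L x)))"
    using teq2_map_swap[OF f g, of "L (s c x)" "map (\<lambda>(u, v). (s1 c u, v)) (L x)"] L unfolding klin_t2_def by blast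
  also have "map (\<lambda>(u, v). (g v, f u)) (map (\<lambda>(u, v). (s1 c u, v)) (L x)) = map (\<lambda>b. ((\<lambda>(u, v). g v) b, t2 c ((\<lambda>(u, v). f u) b))) (L x)"
    using f by (simp add: comp_def case_prod_beta' klin_scale)
  also have "tensor_eq2 t1 t2 \<dots> (map (\<lambda>b. (t1 c ((\<lambda>(u, v). g v) b), (\<lambda>(u, v). f u) b)) (L x))"
    by (rule teq2_map_scR)
  finally show "tensor_eq2 t1 t2 (map (\<lambda>(u, v). (g v, f u)) (L (s c x))) (map (\<lambda>(u, v). (t1 c u, v)) (map (\<lambda>(u, v). (g v, f u)) (L x)))"
    by (simp add: comp_def case_prod_beta')
qed

context HH
begin

definition G :: "'h \<Rightarrow> ('h \<times> 'h) list" where "G c = map (\<lambda>(x, y). (S y, S x)) (D c)"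

lemma tl_G: "tl G"
  unfolding G_def by (rule klin_t2_mapswap[OF lin_D lin_S lin_S])

lemma pr_concat1: "pr (concat (map F Z)) B = concat (map (\<lambda>z. pr (F z) B) Z)"
  by (induction Z) (auto simp: pr_append1)

lemma pr_Nil2[simp]: "pr A [] = []" by (induction A) (auto simp: pr_def)

lemma pr_concat2: "teH (pr A (concat (map F Z))) (concat (map (\<lambda>z. pr A (F z)) Z))"
proof (induction Z)
  case Nil then show ?case by (simp add: teq2_refl)
next
  case (Cons z Z)
  have "teH (pr A (F z @ concat (map F Z))) (pr A (F z) @ pr A (concat (map F Z)))" by (rule pr_append2)
  also have "teH \<dots> (pr A (F z) @ concat (map (\<lambda>z. pr A (F z)) Z))"
    by (rule teq2_append[OF teq2_refl Cons.IH])
  finally show ?case by simp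
qed

lemma tl_D\<alpha>: "tl (\<lambda>x. D (\<alpha> x))" by (rule klin_t2_comp[OF lin_D lin_\<alpha>])

lemma lemK: "teH (concat (map (\<lambda>(u, v). pr (D u) (G v)) (D q))) [(sH (e q) oneH, oneH)]"
proof -
  define H' where "H' z c d = pr (D (\<alpha> z)) [(S d, S c)]" for z c d
  have triH': "ttri sH sH sH sH sH H'"
    unfolding H'_def
    by (intro ttri_of tl_pr1 tl_pr2 tl_D\<alpha> klin_t2_single1 klin_t2_single2 klinH)
  have "teH (concat (map (\<lambda>(u, v). pr (D u) (G v)) (D q)))
            (concat (map (\<lambda>(u, v). concat (map (\<lambda>(c, d). H' (\<alpha> u) c d) (D v))) (D q)))"
    unfolding G_def H'_def
  proof (rule teq2_concat, clarify)
    fix u v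
    have "map (\<lambda>(x, y). (S y, S x)) (D v) = concat (map (\<lambda>(c, d). [(S d, S c)]) (D v))"
      by (rule concat_single2[symmetric])
    then show "teH (pr (D u) (map (\<lambda>(x, y). (S y, S x)) (D v))) (concat (map (\<lambda>(c, d). pr (D (\<alpha> (\<alpha> u))) [(S d, S c)]) (D v)))"
      using pr_concat2[of "D u" "\<lambda>(c, d). [(S d, S c)]" "D v"] by (simp add: case_prod_beta')
  qed
  also have "teH \<dots> (concat (map (\<lambda>(u, v). concat (map (\<lambda>(c, d). H' c d (\<alpha> v)) (D u))) (D q)))"
    by (rule coassoc_t[OF triH'])
  also have "teH \<dots> (concat (map (\<lambda>(u, v). [(M (\<alpha> u) (S (\<alpha> v)), oneH)]) (D q)))"
  proof (rule teq2_concat, clarify)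
    fix u v
    define K' where "K' x y z = [(M (\<alpha> x) (S (\<alpha> v)), M (\<alpha> y) (S (\<alpha> z)))]" for x y z
    have triK: "ttri sH sH sH sH sH K'"
      unfolding K'_def by (intro ttri_of klin_t2_single1 klin_t2_single2 klinH)
    have s1: "teH (H' c d (\<alpha> v)) (concat (map (\<lambda>(x, y). K' x y (\<alpha> d)) (D c)))" for c d
    proof -
      have "teH (H' c d (\<alpha> v)) (pr (map (\<lambda>(x, y). (\<alpha> x, \<alpha> y)) (D c)) [(S (\<alpha> v), S d)])"
        unfolding H'_def by (rule pr_cong1[OF D_\<alpha>])
      then show ?thesis
        by (simp add: pr_single2 K'_def concat_single2 comp_def case_prod_beta')
    qed
    have "teH (concat (map (\<lambda>(c, d). H' c d (\<alpha> v)) (D u)))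
        (concat (map (\<lambda>(c, d). concat (map (\<lambda>(x, y). K' x y (\<alpha> d)) (D c))) (D u)))"
      by (rule teq2_concat) (auto intro: s1)
    also have "teH \<dots> (concat (map (\<lambda>(c, d). concat (map (\<lambda>(x, y). K' (\<alpha> c) x y) (D d))) (D u)))"
      by (rule teq2_sym[OF coassoc_t[OF triK]])
    also have "teH \<dots> (concat (map (\<lambda>(c, d). [(sH (e d) (M c (S (\<alpha> v))), oneH)]) (D u)))"
    proof (rule teq2_concat, clarify)
      fix c d
      have "teH (concat (map (\<lambda>(x, y). K' (\<alpha> c) x y) (D d))) (concat (map (\<lambda>(x, y). [(M c (S (\<alpha> v)), \<alpha> (M x (S y)))]) (D d)))"
        by (simp add: K'_def S_\<alpha> \<alpha>_M teq2_refl)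
      also have "teH \<dots> [(M c (S (\<alpha> v)), \<Sum>(x, y)\<leftarrow>D d. \<alpha> (M x (S y)))]" by (rule tsumR)
      also have "(\<Sum>(x, y)\<leftarrow>D d. \<alpha> (M x (S y))) = sH (e d) oneH"
        by (simp add: sl_klin2[OF lin_\<alpha>] antiRM klin_scale[OF lin_\<alpha>] \<alpha>_one)
      also have "teH [(M c (S (\<alpha> v)), sH (e d) oneH)] [(sH (e d) (M c (S (\<alpha> v))), oneH)]" by (rule teq2_scR)
      finally show "teH (concat (map (\<lambda>(x, y). K' (\<alpha> c) x y) (D d))) [(sH (e d) (M c (S (\<alpha> v))), oneH)]" .
    qed
    also have "teH \<dots> [(\<Sum>(c, d)\<leftarrow>D u. sH (e d) (M c (S (\<alpha> v))), oneH)]" by (rule tsumL)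
    also have "(\<Sum>(c, d)\<leftarrow>D u. sH (e d) (M c (S (\<alpha> v)))) = M (\<alpha> u) (S (\<alpha> v))"
      by (simp add: M_scale1[symmetric] sl_bil1[OF bil_M] counitR')
    finally show "teH (concat (map (\<lambda>(c, d). H' c d (\<alpha> v)) (D u))) [(M (\<alpha> u) (S (\<alpha> v)), oneH)]" .
  qed
  also have "teH \<dots> [(\<Sum>(u, v)\<leftarrow>D q. M (\<alpha> u) (S (\<alpha> v)), oneH)]" by (rule tsumL)
  also have "(\<Sum>(u, v)\<leftarrow>D q. M (\<alpha> u) (S (\<alpha> v))) = sH (e q) oneH"
    by (simp add: S_\<alpha> \<alpha>_M[symmetric] sl_klin2[OF lin_\<alpha>] antiRM klin_scale[OF lin_\<alpha>] \<alpha>_one)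
  finally show ?thesis .
qed


lemma tl_DS: "tl (\<lambda>x. D (S x))" by (rule klin_t2_comp[OF lin_D lin_S])

lemma map_sc_teq: "tensor_eq2 t1 t2 A B \<Longrightarrow> module t1 \<Longrightarrow>
   tensor_eq2 t1 t2 (map (\<lambda>(u, v). (t1 c u, v)) A) (map (\<lambda>(u, v). (t1 c u, v)) B)"
  using teq2_map_lin[of t1 t1 "t1 c" t2 t2 "\<lambda>x. x" A B]
  by (simp add: klin_id klin_scale_const[OF _ klin_id])

lemma D_S: "teH (D (S a)) (G a)"
proof -
  define \<Phi> where "\<Phi> x u v = pr (pr (D (S x)) (D u)) (G v)" for x u v
  have tri: "ttri sH sH sH sH sH \<Phi>"
    unfolding \<Phi>_def by (intro ttri_of tl_pr1 tl_pr2 tl_DS tl_G lin_D)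
  have W12: "teH (concat (map (\<lambda>(p, q). concat (map (\<lambda>(u, v). \<Phi> (\<alpha> p) u v) (D q))) (D a)))
                 (concat (map (\<lambda>(p, q). concat (map (\<lambda>(u, v). \<Phi> u v (\<alpha> q)) (D p))) (D a)))"
    by (rule coassoc_t[OF tri])
  have W2: "teH (concat (map (\<lambda>(p, q). concat (map (\<lambda>(u, v). \<Phi> u v (\<alpha> q)) (D p))) (D a))) (G a)"
  proof -
    have step: "teH (concat (map (\<lambda>(u, v). \<Phi> u v (\<alpha> q)) (D p))) (G (sH (e p) (\<alpha> q)))" for p q
    proof -
      have "teH (concat (map (\<lambda>(u, v). \<Phi> u v (\<alpha> q)) (D p))) (pr (concat (map (\<lambda>(u, v). pr (D (S u)) (D v)) (D p))) (G (\<alpha> q)))"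
        by (simp add: \<Phi>_def pr_concat1 case_prod_beta' teq2_refl)
      also have "teH \<dots> (pr [(sH (e p) oneH, oneH)] (G (\<alpha> q)))"
      proof (rule pr_cong1)
        have "teH (concat (map (\<lambda>(u, v). pr (D (S u)) (D v)) (D p))) (concat (map (\<lambda>(u, v). D (M (S u) v)) (D p)))"
          by (rule teq2_concat) (auto intro: teq2_sym[OF D_M] simp: pr_def)
        also have "teH \<dots> (D (\<Sum>(u, v)\<leftarrow>D p. M (S u) v))" by (rule klin_t2_sum[OF lin_D])
        also have "(\<Sum>(u, v)\<leftarrow>D p. M (S u) v) = sH (e p) oneH" by (rule antiLM)
        also have "teH (D (sH (e p) oneH)) (map (\<lambda>(u, v). (sH (e p) u, v)) (D oneH))"
          using lin_D unfolding klin_t2_def by blast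
        also have "teH \<dots> (map (\<lambda>(u, v). (sH (e p) u, v)) [(oneH, oneH)])"
          by (rule map_sc_teq[OF D_one modH])
        finally show "teH (concat (map (\<lambda>(u, v). pr (D (S u)) (D v)) (D p))) [(sH (e p) oneH, oneH)]" by simp
      qed
      also have "teH (pr [(sH (e p) oneH, oneH)] (G (\<alpha> q))) (map (\<lambda>(u, v). (sH (e p) u, v)) (G (\<alpha> q)))"
        by (simp add: pr_single1 M_scale1 case_prod_beta' teq2_refl)
      also have "teH \<dots> (G (sH (e p) (\<alpha> q)))" by (rule klin_t2_scale[OF tl_G])
      finally show ?thesis .
    qed
    have "teH (concat (map (\<lambda>(p, q). concat (map (\<lambda>(u, v). \<Phi> u v (\<alpha> q)) (D p))) (D a)))
              (concat (map (\<lambda>(p, q). G (sH (e p) (\<alpha> q))) (D a)))"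
      by (rule teq2_concat) (auto intro: step)
    also have "teH \<dots> (G (\<Sum>(p, q)\<leftarrow>D a. sH (e p) (\<alpha> q)))" by (rule klin_t2_sum[OF tl_G])
    also have "(\<Sum>(p, q)\<leftarrow>D a. sH (e p) (\<alpha> q)) = a"
      by (simp add: klin_scale[OF lin_\<alpha>, symmetric] sl_klin2[OF lin_\<alpha>] counitL')
    finally show ?thesis .
  qed
  have W1: "teH (concat (map (\<lambda>(p, q). concat (map (\<lambda>(u, v). \<Phi> (\<alpha> p) u v) (D q))) (D a))) (D (S a))"
  proof -
    have step: "teH (concat (map (\<lambda>(u, v). \<Phi> (\<alpha> p) u v) (D q))) (D (sH (e q) (S (\<alpha> p))))" for p q
    proof -
      have "teH (concat (map (\<lambda>(u, v). \<Phi> (\<alpha> p) u v) (D q))) (concat (map (\<lambda>(u, v). pr (D (S (\<alpha> p))) (pr (D u) (G v))) (D q)))"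
        by (simp add: \<Phi>_def pr_assoc teq2_refl)
      also have "teH \<dots> (pr (D (S (\<alpha> p))) (concat (map (\<lambda>(u, v). pr (D u) (G v)) (D q))))"
        using teq2_sym[OF pr_concat2[of "D (S (\<alpha> p))" "\<lambda>(u, v). pr (D u) (G v)" "D q"]]
        by (simp add: case_prod_beta')
      also have "teH \<dots> (pr (D (S (\<alpha> p))) [(sH (e q) oneH, oneH)])" by (rule pr_cong2[OF lemK])
      also have "teH (pr (D (S (\<alpha> p))) [(sH (e q) oneH, oneH)]) (map (\<lambda>(u, v). (sH (e q) u, v)) (D (S (\<alpha> p))))"
        by (simp add: pr_single2 M_scale2 case_prod_beta' teq2_refl)
      also have "teH \<dots> (D (sH (e q) (S (\<alpha> p))))" by (rule klin_t2_scale[OF lin_D])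
      finally show ?thesis .
    qed
    have "teH (concat (map (\<lambda>(p, q). concat (map (\<lambda>(u, v). \<Phi> (\<alpha> p) u v) (D q))) (D a)))
              (concat (map (\<lambda>(p, q). D (sH (e q) (S (\<alpha> p)))) (D a)))"
      by (rule teq2_concat) (auto intro: step)
    also have "teH \<dots> (D (\<Sum>(p, q)\<leftarrow>D a. sH (e q) (S (\<alpha> p))))" by (rule klin_t2_sum[OF lin_D])
    also have "(\<Sum>(p, q)\<leftarrow>D a. sH (e q) (S (\<alpha> p))) = S a"
      by (simp add: klin_scale[OF lin_\<alpha>, symmetric] klin_scale[OF lin_S, symmetric] sl_klin2[OF lin_\<alpha>] sl_klin2[OF lin_S] counitR')
    finally show ?thesis .
  qed
  show ?thesis using teq2_trans[OF teq2_sym[OF W1] teq2_trans[OF W12 W2]] .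
qed

end


lemma teq2_swap_concat:
  fixes s1 :: "'k::comm_ring_1 \<Rightarrow> _"
  shows "tensor_eq2 s1 s2 (concat (map (\<lambda>(x, y). concat (map (\<lambda>(a, b). f x y a b) B)) A))
                    (concat (map (\<lambda>(a, b). concat (map (\<lambda>(x, y). f x y a b) A)) B))"
proof (rule teq2_eqI)
  have "fsum (concat (map (\<lambda>(x, y). concat (map (\<lambda>(a, b). f x y a b) B)) A)) =
        (\<Sum>(x, y)\<leftarrow>A. \<Sum>(a, b)\<leftarrow>B. (fsum (f x y a b) :: _ \<Rightarrow> 'k))"
    by (simp add: fsum_concat case_prod_beta')
  also have "\<dots> = (\<Sum>(a, b)\<leftarrow>B. \<Sum>(x, y)\<leftarrow>A. fsum (f x y a b))" by (rule sl_swap2)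
  also have "\<dots> = fsum (concat (map (\<lambda>(a, b). concat (map (\<lambda>(x, y). f x y a b) A)) B))"
    by (simp add: fsum_concat case_prod_beta')
  finally show "fsum (concat (map (\<lambda>(x, y). concat (map (\<lambda>(a, b). f x y a b) B)) A)) =
        (fsum (concat (map (\<lambda>(a, b). concat (map (\<lambda>(x, y). f x y a b) A)) B)) :: _ \<Rightarrow> 'k)" .
qed

context HH
begin

abbreviation teA where "teA \<equiv> tensor_eq2 sA sH"

lemma D_T: "teH (D (T y)) (map (\<lambda>(c, d). (T d, T c)) (D y))"
proof -
  have "teH (D (S (T y))) (G (T y))" by (rule D_S)
  from teq2_map_swap[OF lin_T lin_T this]
  have "teH (map (\<lambda>(c, d). (T d, T c)) (D y)) (map (\<lambda>(x, y). (T y, T x)) (G (T y)))" by simp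
  then show ?thesis by (simp add: G_def comp_def case_prod_beta' teq2_sym)
qed

lemma klin_t2_concat1: "(\<And>u v. klin_t2 s t1 t2 (\<lambda>x. F x u v)) \<Longrightarrow> klin_t2 s t1 t2 (\<lambda>x. concat (map (\<lambda>(u, v). F x u v) Z))"
  by (rule klin_t2_concat)

lemma cond_i: "teA (map (\<lambda>(x, y). (\<theta> (\<alpha> g) x, \<alpha> y)) (D h))
   (concat (map (\<lambda>(x, y). map (\<lambda>(u, v). (\<beta> u, mH x v)) (\<rho> (\<theta> y (\<alpha> h)))) (D g)))"
proof -
  define F where "F x' c d = concat (map (\<lambda>(a, b). [(\<beta> (\<phi> (mH a (T d))), mH (\<alpha> b) (mH (T c) x'))]) (D (\<alpha> h)))" for x' c d
  have triF: "ttri sH sH sH sA sH F"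
    unfolding F_def
    by (intro ttri_of klin_t2_concat klin_t2_single1 klin_t2_single2 klinH klin_T klin_\<beta> klin_\<phi>)
  have R1: "teA (concat (map (\<lambda>(x, y). map (\<lambda>(u, v). (\<beta> u, mH x v)) (\<rho> (\<theta> y (\<alpha> h)))) (D g)))
      (concat (map (\<lambda>(x, y). map (\<lambda>(u, v). (\<beta> u, mH v x)) (\<rho> (\<phi> (mH (\<alpha> h) (T y))))) (D g)))"
  proof (rule teq2_concat, clarify)
    fix x y
    have "tensor_eq2 sH sA (map (\<lambda>(u, v). (mH x v, u)) (\<rho> (\<phi> (mH (\<alpha> h) (T y)))))
           (map (\<lambda>(u, v). (mH v x, u)) (\<rho> (\<phi> (mH (\<alpha> h) (T y)))))"
      using A5 by blast
    from teq2_map_swap[OF klin_id lin_\<beta> this]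
    show "teA (map (\<lambda>(u, v). (\<beta> u, mH x v)) (\<rho> (\<theta> y (\<alpha> h)))) (map (\<lambda>(u, v). (\<beta> u, mH v x)) (\<rho> (\<phi> (mH (\<alpha> h) (T y)))))"
      by (simp add: \<theta>_def comp_def case_prod_beta')
  qed
  also have "teA \<dots> (concat (map (\<lambda>(x, y). concat (map (\<lambda>(c, d). F (\<alpha> x) c d) (D y))) (D g)))"
  proof (rule teq2_concat, clarify)
    fix x y
    have lx: "klin sH sH (\<lambda>q. mH q x)" by (intro klinH)
    have l\<beta>\<phi>: "klin sH sA (\<lambda>p. \<beta> (\<phi> p))" by (intro klin_\<beta> klin_\<phi> klin_id)
    have "teA (map (\<lambda>(u, v). (\<beta> u, mH v x)) (\<rho> (\<phi> (mH (\<alpha> h) (T y)))))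
              (map (\<lambda>(u, v). (\<beta> u, mH v x)) (map (\<lambda>(p, q). (\<phi> p, q)) (D (mH (\<alpha> h) (T y)))))"
      by (rule teq2_map_lin[OF lin_\<beta> lx \<rho>\<phi>])
    also have "map (\<lambda>(u, v). (\<beta> u, mH v x)) (map (\<lambda>(p, q). (\<phi> p, q)) (D (mH (\<alpha> h) (T y))))
             = map (\<lambda>(p, q). (\<beta> (\<phi> p), mH q x)) (D (mH (\<alpha> h) (T y)))"
      by (simp add: comp_def case_prod_beta')
    also have "teA \<dots> (map (\<lambda>(p, q). (\<beta> (\<phi> p), mH q x))
       (concat (map (\<lambda>(a, b). map (\<lambda>(c', d'). (mH a c', mH b d')) (D (T y))) (D (\<alpha> h)))))"
      by (rule teq2_map_lin[OF l\<beta>\<phi> lx D_m])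
    also have "teA \<dots> (map (\<lambda>(p, q). (\<beta> (\<phi> p), mH q x))
       (concat (map (\<lambda>(a, b). map (\<lambda>(c', d'). (mH a c', mH b d')) (map (\<lambda>(c, d). (T d, T c)) (D y))) (D (\<alpha> h)))))"
      by (intro teq2_map_lin[OF l\<beta>\<phi> lx] teq2_concat)
         (clarify, rule teq2_map_lin[OF klin_mH2[OF klin_id] klin_mH2[OF klin_id] D_T])
    also have "teA \<dots> (concat (map (\<lambda>(a, b). concat (map (\<lambda>(c, d). [(\<beta> (\<phi> (mH a (T d))), mH (\<alpha> b) (mH (T c) (\<alpha> x)))]) (D y))) (D (\<alpha> h))))"
      by (simp add: map_concat comp_def case_prod_beta' hassoc concat_single2 teq2_refl)
    also have "teA \<dots> (concat (map (\<lambda>(c, d). F (\<alpha> x) c d) (D y)))"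
      unfolding F_def by (rule teq2_swap_concat)
    finally show "teA (map (\<lambda>(u, v). (\<beta> u, mH v x)) (\<rho> (\<phi> (mH (\<alpha> h) (T y))))) (concat (map (\<lambda>(c, d). F (\<alpha> x) c d) (D y)))" .
  qed
  also have "teA \<dots> (concat (map (\<lambda>(x, y). concat (map (\<lambda>(c, d). F c d (\<alpha> y)) (D x))) (D g)))"
    by (rule coassoc_t[OF triF])
  also have "teA \<dots> (concat (map (\<lambda>(x, y). concat (map (\<lambda>(a, b). [(\<beta> (\<phi> (mH a (T (\<alpha> (sH (e x) y))))), b)]) (D (\<alpha> h)))) (D g)))"
  proof (rule teq2_concat, clarify)
    fix x y
    have "teA (concat (map (\<lambda>(c, d). F c d (\<alpha> y)) (D x)))
       (concat (map (\<lambda>(a, b). concat (map (\<lambda>(c, d). [(\<beta> (\<phi> (mH a (T (\<alpha> y)))), mH (\<alpha> b) (mH (T d) c))]) (D x))) (D (\<alpha> h))))"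
      unfolding F_def by (rule teq2_swap_concat)
    also have "teA \<dots> (concat (map (\<lambda>(a, b). [(\<beta> (\<phi> (mH a (T (\<alpha> (sH (e x) y))))), b)]) (D (\<alpha> h))))"
    proof (rule teq2_concat, clarify)
      fix a b
      have "teA (concat (map (\<lambda>(c, d). [(\<beta> (\<phi> (mH a (T (\<alpha> y)))), mH (\<alpha> b) (mH (T d) c))]) (D x)))
                [(\<beta> (\<phi> (mH a (T (\<alpha> y)))), \<Sum>(c, d)\<leftarrow>D x. mH (\<alpha> b) (mH (T d) c))]"
        by (rule tsumR)
      also have "(\<Sum>(c, d)\<leftarrow>D x. mH (\<alpha> b) (mH (T d) c)) = sH (e x) b"
      proof -
        have i: "(\<Sum>(c, d)\<leftarrow>D x. mH (T d) c) = sH (e x) oneH"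
          by (simp add: mH_\<alpha>M sl_klin2[OF lin_\<alpha>] P2M klin_scale[OF lin_\<alpha>] \<alpha>_one)
        have "(\<Sum>(c, d)\<leftarrow>D x. mH (\<alpha> b) (mH (T d) c)) = mH (\<alpha> b) (\<Sum>(c, d)\<leftarrow>D x. mH (T d) c)"
          by (simp add: sl_bil2[OF bil_m])
        then show ?thesis by (simp add: i mH_scale2 unitR)
      qed
      also have "teA [(\<beta> (\<phi> (mH a (T (\<alpha> y)))), sH (e x) b)] [(sA (e x) (\<beta> (\<phi> (mH a (T (\<alpha> y))))), b)]"
        by (rule teq2_scR)
      also have "sA (e x) (\<beta> (\<phi> (mH a (T (\<alpha> y))))) = \<beta> (\<phi> (mH a (T (\<alpha> (sH (e x) y)))))"
        by (simp add: klin_scale[OF lin_\<alpha>] klin_scale[OF lin_T] mH_scale2 klin_scale[OF lin_\<phi>] klin_scale[OF lin_\<beta>])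
      finally show "teA (concat (map (\<lambda>(c, d). [(\<beta> (\<phi> (mH a (T (\<alpha> y)))), mH (\<alpha> b) (mH (T d) c))]) (D x)))
          [(\<beta> (\<phi> (mH a (T (\<alpha> (sH (e x) y))))), b)]" .
    qed
    finally show "teA (concat (map (\<lambda>(c, d). F c d (\<alpha> y)) (D x)))
       (concat (map (\<lambda>(a, b). [(\<beta> (\<phi> (mH a (T (\<alpha> (sH (e x) y))))), b)]) (D (\<alpha> h))))" .
  qed
  also have "teA \<dots> (concat (map (\<lambda>(a, b). concat (map (\<lambda>(x, y). [(\<beta> (\<phi> (mH a (T (\<alpha> (sH (e x) y))))), b)]) (D g))) (D (\<alpha> h))))"
    by (rule teq2_swap_concat)
  also have "teA \<dots> (concat (map (\<lambda>(a, b). [(\<beta> (\<phi> (mH a (T g))), b)]) (D (\<alpha> h))))"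
  proof (rule teq2_concat, clarify)
    fix a b
    have "teA (concat (map (\<lambda>(x, y). [(\<beta> (\<phi> (mH a (T (\<alpha> (sH (e x) y))))), b)]) (D g)))
       [(\<Sum>(x, y)\<leftarrow>D g. \<beta> (\<phi> (mH a (T (\<alpha> (sH (e x) y))))), b)]" by (rule tsumL)
    also have "(\<Sum>(x, y)\<leftarrow>D g. \<beta> (\<phi> (mH a (T (\<alpha> (sH (e x) y)))))) = \<beta> (\<phi> (mH a (T g)))"
      by (simp add: sl_klin2[OF lin_\<beta>] sl_klin2[OF lin_\<phi>] sl_bil2[OF bil_m] sl_klin2[OF lin_T] sl_klin2[OF lin_\<alpha>] counitL')
    finally show "teA (concat (map (\<lambda>(x, y). [(\<beta> (\<phi> (mH a (T (\<alpha> (sH (e x) y))))), b)]) (D g)))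
       [(\<beta> (\<phi> (mH a (T g))), b)]" .
  qed
  also have "teA \<dots> (map (\<lambda>(a, b). (\<beta> (\<phi> (mH a (T g))), b)) (map (\<lambda>(x, y). (\<alpha> x, \<alpha> y)) (D h)))"
    using teq2_map_lin[OF klin_\<beta>[OF klin_\<phi>[OF klin_mH1[OF klin_id]]] klin_id D_\<alpha>[of h]]
    by (simp add: concat_single2)
  also have "teA \<dots> (map (\<lambda>(x, y). (\<theta> (\<alpha> g) x, \<alpha> y)) (D h))"
    by (simp add: comp_def case_prod_beta' \<theta>_def \<phi>_\<alpha>[symmetric] \<alpha>_m T_\<alpha> teq2_refl)
  finally show ?thesis by (rule teq2_sym)
qed

end


lemma sum_list_concat_aux: "sum_list (concat xss) = sum_list (map sum_list xss)"
  by (induction xss) auto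

theorem theorem5p4:
  fixes sH :: "'k::comm_ring_1 \<Rightarrow> 'h::ab_group_add \<Rightarrow> 'h"
    and mH :: "'h \<Rightarrow> 'h \<Rightarrow> 'h" and oneH :: 'h
    and D :: "'h \<Rightarrow> ('h \<times> 'h) list" and e :: "'h \<Rightarrow> 'k"
    and S :: "'h \<Rightarrow> 'h" and \<alpha> :: "'h \<Rightarrow> 'h"
    and sA :: "'k \<Rightarrow> 'a::ab_group_add \<Rightarrow> 'a"
    and mA :: "'a \<Rightarrow> 'a \<Rightarrow> 'a" and oneA :: 'a
    and \<rho> :: "'a \<Rightarrow> ('a \<times> 'h) list" and \<beta> :: "'a \<Rightarrow> 'a"
    and \<phi> :: "'h \<Rightarrow> 'a"
  assumes "hom_hopf sH mH oneH D e S \<alpha>"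
    and "bij S"
    and "hom_comodule_algebra sH mH oneH D e \<alpha> sA mA oneA \<rho> \<beta>"
    and "total_integral sH oneH D \<alpha> sA oneA \<rho> \<beta> \<phi>"
    and "\<forall>g h. tensor_eq2 sH sA
           (map (\<lambda>(x, y). (mH g y, x)) (\<rho> (\<phi> h)))
           (map (\<lambda>(x, y). (mH y g, x)) (\<rho> (\<phi> h)))"
    and "\<forall>h. \<phi> h \<in> center mA"
  shows "normalized_integral sH mH D e \<alpha> sA mA oneA \<rho> \<beta> (\<lambda>g h. \<phi> (mH h (inv S g)))"
proof -
  interpret HH sH mH oneH D e S \<alpha> sA mA oneA \<rho> \<beta> \<phi>
    by (rule HH.intro[OF assms])
  have eq\<theta>: "(\<lambda>g h. \<phi> (mH h (inv S g))) = \<theta>" by (simp add: fun_eq_iff \<theta>_def T_def)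
  show ?thesis
    unfolding normalized_integral_def eq\<theta> inv\<alpha>_eq
    using bil_\<theta> \<theta>_\<alpha> cond_i \<theta>_norm \<theta>_mod by (simp add: sum_list_concat_aux comp_def case_prod_beta')
qed


end
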